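(* Let $\lambda=(\lambda_1,\dots,\lambda_I)$, $\mu=(\mu_1,\dots,\mu_J)$ be partitions of $n$, and let $\tau_{FY},\tau_{FY}^M,\tau_U,\tau_U^M$ be the relaxation times of the Markov chains $P_{FY},P_{FY}^M,P_U,P_U^M$ on $\mathcal{T}_{\lambda,\mu}$ defined in the context. Then (a) $\displaystyle\frac{m_{\lambda,\mu}^2(IJ)^2}{n^2}\tau_U^M\le\tau_U\le\frac{M_{\lambda,\mu}^2(IJ)^2}{n^2}\tau_U^M$; (b) $\displaystyle\frac{n^2}{(IJ)^2M_{\lambda,\mu}^4}\tau_{FY}^M\le\tau_{FY}\le\frac{n^2}{(IJ)^2m_{\lambda,\mu}^4}\tau_{FY}^M$. Moreover $m_{\lambda,\mu}\ge1$ and $M_{\lambda,\mu}\le\max_{i,j}\max(\lambda_i,\mu_j)$.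
   Context: $\mathcal{T}_{\lambda,\mu}$ is the set of $I\times J$ nonnegative integer tables $\mathbf{x}=(x_{ij})$ with row sums $\lambda_i$ and column sums $\mu_j$. For $i_1\ne i_2$, $j_1\ne j_2$, $F_{(i_1,j_1),(i_2,j_2)}(\mathbf{x})$ subtracts $1$ at $(i_1,j_1),(i_2,j_2)$ and adds $1$ at $(i_1,j_2),(i_2,j_1)$. $\pi_{FY}(\mathbf{x})=\frac1{n!}\prod_{i,j}\frac{\lambda_i!\mu_j!}{x_{ij}!}$ is the Fisher–Yates distribution. $P_{FY}$: $P_{FY}(\mathbf{x},\mathbf{y})=2x_{i_1j_1}x_{i_2j_2}/n^2$ if $\mathbf{y}=F_{(i_1,j_1),(i_2,j_2)}(\mathbf{x})\ne\mathbf{x}$, remaining mass on $\mathbf{x}$ (stationary distribution $\pi_{FY}$). $P_U$: $P_U(\mathbf{x},\mathbf{y})=2/(IJ)^2$ if $\mathbf{y}=F_{(i_1,j_1),(i_2,j_2)}(\mathbf{x})\in\mathcal{T}_{\lambda,\mu}$, $\mathbf{y}\neq\mathbf{x}$, remaining mass on $\mathbf{x}$ (uniform stationary distribution). $P_U^M$ is the Metropolis chain with proposal $P_{FY}$ and target the uniform distribution: $P_U^M(\mathbf{x},\mathbf{y})=\min(P_{FY}(\mathbf{x},\mathbf{y}),P_{FY}(\mathbf{y},\mathbf{x}))$ for $\mathbf{y}\ne\mathbf{x}$. $P_{FY}^M$ is the Metropolis chain with proposal $P_U$ and target $\pi_{FY}$: $P_{FY}^M(\mathbf{x},\mathbf{y})=P_U(\mathbf{x},\mathbf{y})\min\left(1,\frac{\pi_{FY}(\mathbf{y})}{\pi_{FY}(\mathbf{x})}\right)$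 for $\mathbf{y}\ne\mathbf{x}$; in both Metropolis chains the rejected mass stays at $\mathbf{x}$. The relaxation time of a reversible chain is $\tau=1/\gamma$ with $\gamma=1-\beta_2$ the spectral gap ($\beta_2$ the second largest eigenvalue). $m_{\lambda,\mu}=\min\{x_{ij}>0:\mathbf{x}\in\mathcal{T}_{\lambda,\mu}\}$ and $M_{\lambda,\mu}=\max\{x_{ij}:\mathbf{x}\in\mathcal{T}_{\lambda,\mu}\}$ (minimum positive entry and maximum entry over all tables). *)

theory Defs
  imports Complex_Main "Jordan_Normal_Form.Char_Poly"
begin

type_synonym table = "nat \<Rightarrow> nat \<Rightarrow> nat"

definition is_partition :: "nat list \<Rightarrow> nat \<Rightarrow> bool" where
  "is_partition p n \<longleftrightarrow> sorted_wrt (\<ge>) p \<and> (\<forall>k\<in>set p. 0 < k) \<and> sum_list p = n"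

definition tables :: "nat list \<Rightarrow> nat list \<Rightarrow> table set" where
  "tables lam mu = {x. (\<forall>i j. (length lam \<le> i \<or> length mu \<le> j) \<longrightarrow> x i j = 0)
      \<and> (\<forall>i<length lam. (\<Sum>j<length mu. x i j) = lam ! i)
      \<and> (\<forall>j<length mu. (\<Sum>i<length lam. x i j) = mu ! j)}"

definition quads :: "nat \<Rightarrow> nat \<Rightarrow> (nat \<times> nat \<times> nat \<times> nat) set" where
  "quads I J = {(i1,j1,i2,j2). i1 < I \<and> i2 < I \<and> j1 < J \<and> j2 < J \<and> i1 \<noteq> i2 \<and> j1 \<noteq> j2}"

definition Fmove :: "nat \<times> nat \<times> nat \<times> nat \<Rightarrow> table \<Rightarrow> nat \<Rightarrow> nat \<Rightarrow> int" where
  "Fmove q x i j = (case q of (i1,j1,i2,j2) \<Rightarrow>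
      int (x i j)
      - (if (i,j) = (i1,j1) then 1 else 0) - (if (i,j) = (i2,j2) then 1 else 0)
      + (if (i,j) = (i1,j2) then 1 else 0) + (if (i,j) = (i2,j1) then 1 else 0))"

definition is_move :: "nat \<Rightarrow> nat \<Rightarrow> nat \<times> nat \<times> nat \<times> nat \<Rightarrow> table \<Rightarrow> table \<Rightarrow> bool" where
  "is_move I J q x y \<longleftrightarrow> q \<in> quads I J \<and> (\<lambda>i j. int (y i j)) = Fmove q x"

definition kernel_of :: "'s set \<Rightarrow> ('s \<Rightarrow> 's \<Rightarrow> real) \<Rightarrow> 's \<Rightarrow> 's \<Rightarrow> real" where
  "kernel_of S Q x y = (if x = y then 1 - (\<Sum>z\<in>S - {x}. Q x z) else Q x y)"


definition piFY :: "nat list \<Rightarrow> nat list \<Rightarrow> table \<Rightarrow> real" where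
  "piFY lam mu x = (\<Prod>i<length lam. fact (lam ! i)) * (\<Prod>j<length mu. fact (mu ! j))
      / (fact (sum_list lam) * (\<Prod>i<length lam. \<Prod>j<length mu. fact (x i j)))"

definition PFY_off :: "nat list \<Rightarrow> nat list \<Rightarrow> table \<Rightarrow> table \<Rightarrow> real" where
  "PFY_off lam mu x y =
     (if y \<noteq> x \<and> (\<exists>q. is_move (length lam) (length mu) q x y) then
        (case (SOME q. is_move (length lam) (length mu) q x y) of (i1,j1,i2,j2) \<Rightarrow>
           2 * real (x i1 j1) * real (x i2 j2) / real (sum_list lam) ^ 2)
      else 0)"

definition PU_off :: "nat list \<Rightarrow> nat list \<Rightarrow> table \<Rightarrow> table \<Rightarrow> real" where
  "PU_off lam mu x y =
     (if y \<noteq> x \<and> y \<in> tables lam mu \<and> (\<exists>q. is_move (length lam) (length mu) q x y)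
      then 2 / (real (length lam * length mu)) ^ 2 else 0)"

definition P_FY :: "nat list \<Rightarrow> nat list \<Rightarrow> table \<Rightarrow> table \<Rightarrow> real" where
  "P_FY lam mu = kernel_of (tables lam mu) (PFY_off lam mu)"

definition P_U :: "nat list \<Rightarrow> nat list \<Rightarrow> table \<Rightarrow> table \<Rightarrow> real" where
  "P_U lam mu = kernel_of (tables lam mu) (PU_off lam mu)"

text \<open>Metropolis chain with proposal P_FY and uniform target.\<close>
definition P_UM :: "nat list \<Rightarrow> nat list \<Rightarrow> table \<Rightarrow> table \<Rightarrow> real" where
  "P_UM lam mu = kernel_of (tables lam mu)
      (\<lambda>x y. min (P_FY lam mu x y) (P_FY lam mu y x))"

definition P_FYM :: "nat list \<Rightarrow> nat list \<Rightarrow> table \<Rightarrow> table \<Rightarrow> real" where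
  "P_FYM lam mu = kernel_of (tables lam mu)
      (\<lambda>x y. P_U lam mu x y * min 1 (piFY lam mu y / piFY lam mu x))"

definition enum_states :: "'s set \<Rightarrow> 's list" where
  "enum_states S = (SOME xs. distinct xs \<and> set xs = S)"

definition trans_mat :: "'s set \<Rightarrow> ('s \<Rightarrow> 's \<Rightarrow> real) \<Rightarrow> real mat" where
  "trans_mat S P = (let xs = enum_states S in
      mat (length xs) (length xs) (\<lambda>(a,b). P (xs ! a) (xs ! b)))"

text \<open>Eigenvalues counted with (algebraic) multiplicity, in weakly decreasing order
  (the characteristic polynomial of a reversible chain splits over the reals).\<close>
definition eigenvalues_desc :: "real mat \<Rightarrow> real list" where
  "eigenvalues_desc A = (SOME es. sorted_wrt (\<ge>) es \<and>
      char_poly A = prod_list (map (\<lambda>e. [:-e, 1:]) es))"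

definition second_eigenvalue :: "'s set \<Rightarrow> ('s \<Rightarrow> 's \<Rightarrow> real) \<Rightarrow> real" where
  "second_eigenvalue S P = eigenvalues_desc (trans_mat S P) ! 1"

definition spectral_gap :: "'s set \<Rightarrow> ('s \<Rightarrow> 's \<Rightarrow> real) \<Rightarrow> real" where
  "spectral_gap S P = 1 - second_eigenvalue S P"

definition relaxation_time :: "'s set \<Rightarrow> ('s \<Rightarrow> 's \<Rightarrow> real) \<Rightarrow> real" where
  "relaxation_time S P = 1 / spectral_gap S P"

definition min_pos_entry :: "nat list \<Rightarrow> nat list \<Rightarrow> nat" where
  "min_pos_entry lam mu = Min {x i j | x i j. x \<in> tables lam mu \<and> i < length lam \<and> j < length mu \<and> 0 < x i j}"

definition max_entry :: "nat list \<Rightarrow> nat list \<Rightarrow> nat" where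
  "max_entry lam mu = Max {x i j | x i j. x \<in> tables lam mu \<and> i < length lam \<and> j < length mu}"

end

theory Submission
  imports Defs "HOL-Analysis.Function_Topology"
begin


definition ipw :: "nat \<Rightarrow> (nat \<Rightarrow> real) \<Rightarrow> (nat \<Rightarrow> real) \<Rightarrow> (nat \<Rightarrow> real) \<Rightarrow> real" where
  "ipw N p f g = (\<Sum>i<N. p i * f i * g i)"
definition Aop :: "nat \<Rightarrow> (nat \<Rightarrow> nat \<Rightarrow> real) \<Rightarrow> (nat \<Rightarrow> real) \<Rightarrow> nat \<Rightarrow> real" where
  "Aop N a f i = (\<Sum>j<N. a i j * f j)"
definition Qf :: "nat \<Rightarrow> (nat \<Rightarrow> nat \<Rightarrow> real) \<Rightarrow> (nat \<Rightarrow> real) \<Rightarrow> (nat \<Rightarrow> real) \<Rightarrow> real" where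
  "Qf N a p f = ipw N p f (Aop N a f)"
definition Dir :: "nat \<Rightarrow> (nat \<Rightarrow> nat \<Rightarrow> real) \<Rightarrow> (nat \<Rightarrow> real) \<Rightarrow> (nat \<Rightarrow> real) \<Rightarrow> real" where
  "Dir N a p f = (\<Sum>i<N. \<Sum>j<N. p i * a i j * (f i - f j)^2) / 2"

lemma abs_le_sq: "\<bar>x::real\<bar> \<le> 1 + x^2"
proof -
  have "0 \<le> (\<bar>x\<bar> - 1)^2" by simp
  also have "(\<bar>x\<bar> - 1)^2 = x^2 - 2 * \<bar>x\<bar> + 1"
    by (simp add: power2_eq_square algebra_simps)
  finally have "2 * \<bar>x\<bar> \<le> x^2 + 1" by simp
  moreover have "0 \<le> x^2" by simp
  ultimately show ?thesis by linarith
qed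

locale revk =
  fixes N :: nat and a :: "nat \<Rightarrow> nat \<Rightarrow> real" and p :: "nat \<Rightarrow> real"
  assumes N2: "2 \<le> N"
  and ppos: "\<And>i. i < N \<Longrightarrow> 0 < p i"
  and rev: "\<And>i j. i < N \<Longrightarrow> j < N \<Longrightarrow> p i * a i j = p j * a j i"
  and rows: "\<And>i. i < N \<Longrightarrow> (\<Sum>j<N. a i j) = 1"
  and offd: "\<And>i j. i < N \<Longrightarrow> j < N \<Longrightarrow> i \<noteq> j \<Longrightarrow> 0 \<le> a i j"
begin

lemma pnn: "i < N \<Longrightarrow> 0 \<le> p i"
  using ppos[of i] by simp

lemma pff: "i < N \<Longrightarrow> 0 \<le> p i * (f i * f i)"
proof -
  assume "i < N"
  then have "0 \<le> p i" using ppos[of i] by simp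
  moreover have "0 \<le> f i * f i" by simp
  ultimately show ?thesis by (rule mult_nonneg_nonneg)
qed

lemma selfadj: "ipw N p (Aop N a f) g = ipw N p f (Aop N a g)"
proof -
  have "ipw N p (Aop N a f) g = (\<Sum>i<N. \<Sum>j<N. p i * a i j * f j * g i)"
    unfolding ipw_def Aop_def by (simp add: sum_distrib_left sum_distrib_right mult_ac)
  also have "\<dots> = (\<Sum>i<N. \<Sum>j<N. p j * a j i * f j * g i)"
    by (intro sum.cong refl) (simp add: rev)
  also have "\<dots> = (\<Sum>j<N. \<Sum>i<N. p j * a j i * f j * g i)"
    by (rule sum.swap)
  also have "\<dots> = ipw N p f (Aop N a g)"
    unfolding ipw_def Aop_def by (simp add: sum_distrib_left sum_distrib_right mult_ac)
  finally show ?thesis .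
qed

lemma Aop_one: "i < N \<Longrightarrow> Aop N a (\<lambda>_. 1) i = 1"
  unfolding Aop_def using rows by simp

lemma ipw_sym: "ipw N p f g = ipw N p g f"
  unfolding ipw_def by (simp add: mult_ac)

lemma ipw_nonneg: "0 \<le> ipw N p f f"
  unfolding ipw_def using ppos by (intro sum_nonneg) (auto simp: mult.assoc pff)

lemma ipw_zero: "ipw N p f f = 0 \<longleftrightarrow> (\<forall>i<N. f i = 0)"
proof
  assume "ipw N p f f = 0"
  then have "\<forall>i\<in>{..<N}. p i * f i * f i = 0"
    unfolding ipw_def using ppos by (subst sum_nonneg_eq_0_iff[symmetric]) (auto simp: mult.assoc pff)
  then show "\<forall>i<N. f i = 0"
  proof (intro allI impI)
    fix i assume "\<forall>i\<in>{..<N}. p i * f i * f i = 0" "i < N"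
    then have "p i * f i * f i = 0" by auto
    then show "f i = 0" using ppos[OF \<open>i < N\<close>] by simp
  qed
qed (simp add: ipw_def)

lemma Dir_eq: "ipw N p f f - Qf N a p f = Dir N a p f"
proof -
  have e1: "(\<Sum>i<N. \<Sum>j<N. p i * a i j * (f i)^2) = ipw N p f f"
    unfolding ipw_def using rows by (simp add: sum_distrib_left[symmetric] power2_eq_square mult_ac
        flip: sum_distrib_right)
  have "(\<Sum>i<N. \<Sum>j<N. p i * a i j * (f j)^2) = (\<Sum>i<N. \<Sum>j<N. p j * a j i * (f j)^2)"
    by (intro sum.cong refl) (simp add: rev)
  also have "\<dots> = (\<Sum>j<N. \<Sum>i<N. p j * a j i * (f j)^2)" by (rule sum.swap)
  also have "\<dots> = ipw N p f f" using e1 by simp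
  finally have e3: "(\<Sum>i<N. \<Sum>j<N. p i * a i j * (f j)^2) = ipw N p f f" .
  have e2: "(\<Sum>i<N. \<Sum>j<N. p i * a i j * (f i * f j)) = Qf N a p f"
    unfolding Qf_def ipw_def Aop_def by (simp add: sum_distrib_left mult_ac)
  have "(\<Sum>i<N. \<Sum>j<N. p i * a i j * (f i - f j)^2)
      = (\<Sum>i<N. \<Sum>j<N. p i * a i j * (f i)^2) - 2 * (\<Sum>i<N. \<Sum>j<N. p i * a i j * (f i * f j))
        + (\<Sum>i<N. \<Sum>j<N. p i * a i j * (f j)^2)"
    by (simp add: power2_diff algebra_simps sum.distrib sum_subtractf sum_distrib_left)
  then show ?thesis unfolding Dir_def using e1 e2 e3 by simp
qed

lemma Dir_nonneg: "0 \<le> Dir N a p f"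
  unfolding Dir_def
proof -
  have "0 \<le> (\<Sum>i<N. \<Sum>j<N. p i * a i j * (f i - f j)^2)"
  proof (intro sum_nonneg)
    fix i j assume "i \<in> {..<N}" "j \<in> {..<N}"
    then show "0 \<le> p i * a i j * (f i - f j)^2"
      using ppos[of i] offd[of i j] by (cases "i = j") auto
  qed
  then show "0 \<le> (\<Sum>i<N. \<Sum>j<N. p i * a i j * (f i - f j)^2) / 2" by simp
qed

lemma Q_le: "Qf N a p f \<le> ipw N p f f"
  using Dir_eq[of f] Dir_nonneg[of f] by simp

lemma ipw_cong: "(\<And>i. i < N \<Longrightarrow> f i = f' i) \<Longrightarrow> (\<And>i. i < N \<Longrightarrow> g i = g' i) \<Longrightarrow>
   ipw N p f g = ipw N p f' g'"
  unfolding ipw_def by (intro sum.cong) auto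

lemma Aop_cong: "(\<And>i. i < N \<Longrightarrow> f i = f' i) \<Longrightarrow> Aop N a f j = Aop N a f' j"
  unfolding Aop_def by (intro sum.cong) auto

lemma Qf_cong: "(\<And>i. i < N \<Longrightarrow> f i = f' i) \<Longrightarrow> Qf N a p f = Qf N a p f'"
  unfolding Qf_def by (intro ipw_cong) (auto intro: Aop_cong)

lemma ipw_scale_left: "ipw N p (\<lambda>i. c * f i) g = c * ipw N p f g"
  unfolding ipw_def by (simp add: sum_distrib_left mult_ac)
lemma ipw_scale_right: "ipw N p f (\<lambda>i. c * g i) = c * ipw N p f g"
  unfolding ipw_def by (simp add: sum_distrib_left mult_ac)
lemma ipw_add_left: "ipw N p (\<lambda>i. f i + g i) h = ipw N p f h + ipw N p g h"
  unfolding ipw_def by (simp add: sum.distrib algebra_simps)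
lemma ipw_add_right: "ipw N p h (\<lambda>i. f i + g i) = ipw N p h f + ipw N p h g"
  unfolding ipw_def by (simp add: sum.distrib algebra_simps)
lemma ipw_diff_left: "ipw N p (\<lambda>i. f i - g i) h = ipw N p f h - ipw N p g h"
  unfolding ipw_def by (simp add: sum_subtractf algebra_simps)
lemma Aop_scale: "Aop N a (\<lambda>i. c * f i) = (\<lambda>j. c * Aop N a f j)"
  unfolding Aop_def by (simp add: sum_distrib_left mult_ac)
lemma Aop_add: "Aop N a (\<lambda>i. f i + g i) = (\<lambda>j. Aop N a f j + Aop N a g j)"
  unfolding Aop_def by (simp add: sum.distrib algebra_simps)
lemma Qf_scale: "Qf N a p (\<lambda>i. c * f i) = c^2 * Qf N a p f"
  unfolding Qf_def Aop_scale ipw_scale_left ipw_scale_right by (simp add: power2_eq_square)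

lemma Qf_expand: "Qf N a p (\<lambda>i. f i + t * h i) =
   Qf N a p f + 2 * t * ipw N p (Aop N a f) h + t^2 * Qf N a p h"
proof -
  have "Qf N a p (\<lambda>i. f i + t * h i) = ipw N p (\<lambda>i. f i + t * h i) (\<lambda>j. Aop N a f j + t * Aop N a h j)"
    unfolding Qf_def Aop_add Aop_scale ..
  also have "\<dots> = Qf N a p f + t * ipw N p f (Aop N a h) + t * ipw N p h (Aop N a f) + t^2 * Qf N a p h"
    unfolding ipw_add_left ipw_add_right ipw_scale_left ipw_scale_right Qf_def
    by (simp add: algebra_simps power2_eq_square)
  also have "ipw N p f (Aop N a h) = ipw N p (Aop N a f) h" using selfadj by simp
  also have "ipw N p h (Aop N a f) = ipw N p (Aop N a f) h" using ipw_sym by simp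
  finally show ?thesis by simp
qed

lemma ipw_expand: "ipw N p (\<lambda>i. f i + t * h i) (\<lambda>i. f i + t * h i) =
   ipw N p f f + 2 * t * ipw N p f h + t^2 * ipw N p h h"
  unfolding ipw_add_left ipw_add_right ipw_scale_left ipw_scale_right
  using ipw_sym[of h f] by (simp add: algebra_simps power2_eq_square)

definition Kset :: "(nat \<Rightarrow> real) set" where
  "Kset = {f. (\<forall>i. N \<le> i \<longrightarrow> f i = 0) \<and> ipw N p f (\<lambda>_. 1) = 0 \<and> ipw N p f f = 1}"

lemma cont_ipw1: "continuous_on UNIV (\<lambda>f::nat\<Rightarrow>real. ipw N p f (\<lambda>_. 1))"
  unfolding ipw_def by (intro continuous_intros continuous_on_product_coordinates)
lemma cont_ipw2: "continuous_on UNIV (\<lambda>f::nat\<Rightarrow>real. ipw N p f f)"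
  unfolding ipw_def by (intro continuous_intros continuous_on_product_coordinates)
lemma cont_Qf: "continuous_on S (\<lambda>f::nat\<Rightarrow>real. Qf N a p f)"
  unfolding Qf_def ipw_def Aop_def
  by (intro continuous_intros continuous_on_subset[OF continuous_on_product_coordinates] subset_UNIV)

lemma Kset_bound: assumes "f \<in> Kset" shows "f \<in> Pi UNIV (\<lambda>_. {-(1 + (\<Sum>i<N. 1 / p i))..1 + (\<Sum>i<N. 1 / p i)})"
proof -
  let ?B = "1 + (\<Sum>i<N. 1 / p i)"
  have "\<bar>f i\<bar> \<le> ?B" for i
  proof (cases "i < N")
    case True
    have "p i * f i * f i \<le> (\<Sum>k<N. p k * f k * f k)"
      using True ppos by (intro member_le_sum) (auto simp: mult.assoc pff)
    also have "\<dots> = 1" using assms unfolding Kset_def ipw_def by simp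
    finally have "p i * (f i)^2 \<le> 1" by (simp add: power2_eq_square mult.assoc)
    then have "(f i)^2 \<le> 1 / p i" using ppos[OF True] by (simp add: field_simps)
    also have "1 / p i \<le> (\<Sum>k<N. 1 / p k)"
      using True by (intro member_le_sum) (simp_all add: pnn)
    finally have "(f i)^2 \<le> (\<Sum>k<N. 1 / p k)" .
    moreover have "\<bar>f i\<bar> \<le> 1 + (f i)^2" by (rule abs_le_sq)
    ultimately show ?thesis by simp
  next
    case False
    then have "f i = 0" using assms unfolding Kset_def by auto
    moreover have "0 \<le> (\<Sum>k<N. 1 / p k)" by (intro sum_nonneg) (simp add: pnn)
    ultimately show ?thesis by simp
  qed
  then show ?thesis
  proof (intro Pi_I)
    fix x assume h: "\<And>i. \<bar>f i\<bar> \<le> ?B"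
    from h[of x] show "f x \<in> {-?B..?B}" by (simp add: abs_le_iff)
  qed
qed

lemma Kset_compact: "compact Kset"
proof -
  let ?B = "1 + (\<Sum>i<N. 1 / p i)"
  have "compactin (product_topology (\<lambda>_. euclidean) UNIV) (PiE UNIV (\<lambda>_::nat. {-?B..?B}))"
    by (subst compactin_PiE) auto
  then have c: "compact (Pi UNIV (\<lambda>_::nat. {-?B..?B}))"
    by (simp add: euclidean_product_topology PiE_UNIV_domain)
  have "Kset = (\<Inter>i\<in>{N..}. {f. f i = 0}) \<inter> {f. ipw N p f (\<lambda>_. 1) = 0} \<inter> {f. ipw N p f f = 1}"
    unfolding Kset_def by auto
  moreover have "closed \<dots>"
    by (intro closed_Int closed_INT ballI closed_Collect_eq cont_ipw1 cont_ipw2 continuous_on_const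
        continuous_on_product_coordinates)
  ultimately have cl: "closed Kset" by simp
  have "Kset = Pi UNIV (\<lambda>_::nat. {-?B..?B}) \<inter> Kset" using Kset_bound by auto
  then show ?thesis using compact_Int_closed[OF c cl] by simp
qed

lemma normalize_in_K:
  assumes z: "\<And>i. N \<le> i \<Longrightarrow> g i = 0" and o: "ipw N p g (\<lambda>_. 1) = 0" and pos: "0 < ipw N p g g"
  shows "(\<lambda>i. (1 / sqrt (ipw N p g g)) * g i) \<in> Kset"
proof -
  let ?c = "1 / sqrt (ipw N p g g)"
  have "ipw N p (\<lambda>i. ?c * g i) (\<lambda>_. 1) = ?c * ipw N p g (\<lambda>_. 1)" by (rule ipw_scale_left)
  then have 1: "ipw N p (\<lambda>i. ?c * g i) (\<lambda>_. 1) = 0" using o by simp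
  have "ipw N p (\<lambda>i. ?c * g i) (\<lambda>i. ?c * g i) = ?c * (?c * ipw N p g g)"
    by (simp only: ipw_scale_left ipw_scale_right)
  also have "\<dots> = 1"
  proof -
    have "sqrt (ipw N p g g) * sqrt (ipw N p g g) = ipw N p g g" using pos by simp
    moreover have "sqrt (ipw N p g g) \<noteq> 0" using pos by simp
    ultimately show ?thesis by (simp add: divide_simps)
  qed
  finally show ?thesis using 1 z unfolding Kset_def by auto
qed

lemma Kset_nonempty: "Kset \<noteq> {}"
proof -
  define g where "g = (\<lambda>i::nat. (if i = 0 then 1 / p 0 else 0) + (if i = 1 then - 1 / p 1 else (0::real)))"
  have N0: "0 < N" "1 < N" using N2 by auto
  have z: "\<And>i. N \<le> i \<Longrightarrow> g i = 0" using N2 unfolding g_def by auto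
  have "ipw N p g (\<lambda>_. 1) = (\<Sum>i<N. (if i = 0 then p i / p 0 else 0) + (if i = 1 then - p i / p 1 else 0))"
    unfolding ipw_def g_def by (intro sum.cong) auto
  also have "\<dots> = 0" using N0 ppos[of 0] ppos[of 1] by (simp add: sum.distrib)
  finally have o: "ipw N p g (\<lambda>_. 1) = 0" .
  have "g 0 \<noteq> 0" unfolding g_def using ppos[of 0] N0 by auto
  then have "ipw N p g g \<noteq> 0" using ipw_zero[of g] N0 by auto
  then have "0 < ipw N p g g" using ipw_nonneg[of g] by simp
  from normalize_in_K[OF z o this] show ?thesis by auto
qed

definition fstar where "fstar = (SOME f. f \<in> Kset \<and> (\<forall>g\<in>Kset. Qf N a p g \<le> Qf N a p f))"
definition lstar where "lstar = Qf N a p fstar"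

lemma fstar: "fstar \<in> Kset" "\<And>g. g \<in> Kset \<Longrightarrow> Qf N a p g \<le> lstar"
proof -
  have "\<exists>f\<in>Kset. \<forall>g\<in>Kset. Qf N a p g \<le> Qf N a p f"
    by (rule continuous_attains_sup[OF Kset_compact Kset_nonempty cont_Qf])
  then have "fstar \<in> Kset \<and> (\<forall>g\<in>Kset. Qf N a p g \<le> Qf N a p fstar)"
    unfolding fstar_def by (rule someI_ex[where P = "\<lambda>f. f \<in> Kset \<and> (\<forall>g\<in>Kset. Qf N a p g \<le> Qf N a p f)", OF bexE]) blast+
  then show "fstar \<in> Kset" "\<And>g. g \<in> Kset \<Longrightarrow> Qf N a p g \<le> lstar" unfolding lstar_def by auto
qed

lemma rayleigh_le: assumes o: "ipw N p g (\<lambda>_. 1) = 0" shows "Qf N a p g \<le> lstar * ipw N p g g"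
proof -
  define g' where "g' = (\<lambda>i. if i < N then g i else 0)"
  have eq: "\<And>i. i < N \<Longrightarrow> g' i = g i" unfolding g'_def by auto
  have z: "\<And>i. N \<le> i \<Longrightarrow> g' i = 0" unfolding g'_def by auto
  have "ipw N p g' (\<lambda>_. 1) = ipw N p g (\<lambda>_. 1)" by (rule ipw_cong) (simp_all add: eq)
  then have o': "ipw N p g' (\<lambda>_. 1) = 0" using o by simp
  have Qe: "Qf N a p g' = Qf N a p g" by (rule Qf_cong[OF eq])
  have Ie: "ipw N p g' g' = ipw N p g g" by (rule ipw_cong[OF eq eq])
  show ?thesis
  proof (cases "ipw N p g g = 0")
    case True
    then have "\<forall>i<N. g i = 0" using ipw_zero by simp
    then have "Qf N a p g = Qf N a p (\<lambda>_. 0)" by (intro Qf_cong) auto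
    also have "\<dots> = 0" unfolding Qf_def ipw_def by simp
    finally show ?thesis using True by simp
  next
    case False
    then have pos: "0 < ipw N p g' g'" using ipw_nonneg[of g] Ie by simp
    have "Qf N a p (\<lambda>i. (1 / sqrt (ipw N p g' g')) * g' i) \<le> lstar"
      by (rule fstar(2)[OF normalize_in_K[OF z o' pos]])
    then have "Qf N a p g' / ipw N p g' g' \<le> lstar"
      unfolding Qf_scale using pos by (simp add: power_divide real_sqrt_pow2)
    then show ?thesis using pos Qe Ie by (simp add: divide_le_eq mult.commute)
  qed
qed

lemma quad_zero: fixes b c :: real assumes "\<And>t. b * t + c * t^2 \<le> 0" shows "b = 0"
proof -
  define s where "s = b / (\<bar>c\<bar> + 1)"
  have pos: "0 < \<bar>c\<bar> + 1" by simp
  have "b * s + c * s^2 \<le> 0" by (rule assms)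
  then have "(b * s + c * s^2) * (\<bar>c\<bar> + 1)^2 \<le> 0"
    by (simp add: mult_nonpos_nonneg)
  also have "(b * s + c * s^2) * (\<bar>c\<bar> + 1)^2 = b * (s * (\<bar>c\<bar> + 1)) * (\<bar>c\<bar> + 1) + c * (s * (\<bar>c\<bar> + 1))^2"
    by (simp add: algebra_simps power2_eq_square)
  also have "s * (\<bar>c\<bar> + 1) = b" unfolding s_def using pos by simp
  also have "b * b * (\<bar>c\<bar> + 1) + c * b^2 = b^2 * (\<bar>c\<bar> + 1 + c)"
    by (simp add: algebra_simps power2_eq_square)
  finally have "b^2 * (\<bar>c\<bar> + 1 + c) \<le> 0" .
  moreover have "0 < \<bar>c\<bar> + 1 + c" by linarith
  ultimately have "b^2 \<le> 0" by (simp add: mult_le_0_iff)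
  then show ?thesis by simp
qed

lemma fstar_eigen: "\<And>i. i < N \<Longrightarrow> Aop N a fstar i = lstar * fstar i"
proof -
  have fK: "\<And>i. N \<le> i \<Longrightarrow> fstar i = 0" "ipw N p fstar (\<lambda>_. 1) = 0" "ipw N p fstar fstar = 1"
    using fstar(1) unfolding Kset_def by auto
  have lag: "ipw N p (Aop N a fstar) h = lstar * ipw N p fstar h" if ho: "ipw N p h (\<lambda>_. 1) = 0" for h
  proof -
    have "\<And>t. (2 * (ipw N p (Aop N a fstar) h - lstar * ipw N p fstar h)) * t
        + (Qf N a p h - lstar * ipw N p h h) * t^2 \<le> 0"
    proof -
      fix t
      have "ipw N p (\<lambda>i. fstar i + t * h i) (\<lambda>_. 1) = 0"
        using fK(2) ho unfolding ipw_add_left ipw_scale_left by simp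
      from rayleigh_le[OF this] show "(2 * (ipw N p (Aop N a fstar) h - lstar * ipw N p fstar h)) * t
        + (Qf N a p h - lstar * ipw N p h h) * t^2 \<le> 0"
        unfolding Qf_expand ipw_expand fK(3) lstar_def by (simp add: algebra_simps)
    qed
    from quad_zero[OF this] show ?thesis by simp
  qed
  define h where "h = (\<lambda>i. Aop N a fstar i - lstar * fstar i)"
  have "ipw N p (Aop N a fstar) (\<lambda>_. 1) = ipw N p fstar (Aop N a (\<lambda>_. 1))" by (rule selfadj)
  also have "\<dots> = ipw N p fstar (\<lambda>_. 1)" by (intro ipw_cong) (auto simp: Aop_one)
  finally have "ipw N p h (\<lambda>_. 1) = 0" unfolding h_def ipw_diff_left ipw_scale_left using fK(2) by simp
  from lag[OF this] have "ipw N p h h = 0"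
    unfolding h_def ipw_diff_left ipw_scale_left using ipw_sym by (simp add: ipw_diff_left[of _ _ "Aop N a fstar"])
  then show "\<And>i. i < N \<Longrightarrow> Aop N a fstar i = lstar * fstar i" using ipw_zero unfolding h_def by auto
qed


definition EVs :: "real set" where
  "EVs = {e. \<exists>g. (\<forall>i<N. Aop N a g i = e * g i) \<and> (\<exists>i<N. g i \<noteq> 0) \<and> ipw N p g (\<lambda>_. 1) = 0}"

lemma fstar_props: "ipw N p fstar (\<lambda>_. 1) = 0" "ipw N p fstar fstar = 1"
  using fstar(1) unfolding Kset_def by auto

lemma lstar_EV: "lstar \<in> EVs"
proof -
  have "\<not> (\<forall>i<N. fstar i = 0)" using ipw_zero[of fstar] fstar_props by simp
  then show ?thesis unfolding EVs_def using fstar_eigen fstar_props by blast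
qed

lemma EV_le: assumes "e \<in> EVs" shows "e \<le> lstar"
proof -
  obtain g where g: "\<And>i. i < N \<Longrightarrow> Aop N a g i = e * g i" "\<exists>i<N. g i \<noteq> 0" "ipw N p g (\<lambda>_. 1) = 0"
    using assms unfolding EVs_def by blast
  have pos: "0 < ipw N p g g" using ipw_zero[of g] ipw_nonneg[of g] g(2) by force
  have "Qf N a p g = ipw N p g (\<lambda>i. e * g i)" unfolding Qf_def by (rule ipw_cong) (simp_all add: g(1))
  also have "\<dots> = e * ipw N p g g" by (rule ipw_scale_right)
  finally have "e * ipw N p g g \<le> lstar * ipw N p g g" using rayleigh_le[OF g(3)] by simp
  then show ?thesis using pos by simp
qed

lemma lstar_le1: "lstar \<le> 1"
  using Q_le[of fstar] fstar_props unfolding lstar_def by simp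

subsection \<open>Matrices\<close>

definition Am :: "real mat" where "Am = mat N N (\<lambda>(i,j). a i j)"
definition Pm :: "real mat" where "Pm = mat N N (\<lambda>(i,j). if j = 0 \<or> i = j then 1 else 0)"
definition Pim :: "real mat" where "Pim = mat N N (\<lambda>(i,j). if i = j then 1 else if j = 0 then -1 else 0)"
definition Bm :: "real mat" where "Bm = mat N N (\<lambda>(i,j). if j = 0 then (if i = 0 then 1 else 0)
    else if i = 0 then a 0 j else a i j - a 0 j)"
definition Cm :: "real mat" where "Cm = mat (N - 1) (N - 1) (\<lambda>(i,j). a (Suc i) (Suc j) - a 0 (Suc j))"

lemma carriers: "Am \<in> carrier_mat N N" "Pm \<in> carrier_mat N N" "Pim \<in> carrier_mat N N"
  "Bm \<in> carrier_mat N N" "Cm \<in> carrier_mat (N - 1) (N - 1)"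
  unfolding Am_def Pm_def Pim_def Bm_def Cm_def by auto

lemma mult_entry: assumes "A \<in> carrier_mat n n" "B \<in> carrier_mat n n" "i < n" "j < n"
  shows "(A * B) $$ (i, j) = (\<Sum>k<n. A $$ (i, k) * B $$ (k, j))"
proof -
  have "(A * B) $$ (i, j) = row A i \<bullet> col B j" using assms by simp
  also have "\<dots> = (\<Sum>k\<in>{0..<n}. row A i $ k * col B j $ k)" unfolding scalar_prod_def using assms by simp
  also have "\<dots> = (\<Sum>k<n. A $$ (i, k) * B $$ (k, j))"
    using assms by (auto simp: atLeast0LessThan intro!: sum.cong)
  finally show ?thesis .
qed

lemma Pim_Pm: "Pim * Pm = 1\<^sub>m N"
proof (rule eq_matI)
  fix i j assume "i < dim_row (1\<^sub>m N :: real mat)" "j < dim_col (1\<^sub>m N :: real mat)"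
  then have i: "i < N" and j: "j < N" by auto
  have "(Pim * Pm) $$ (i, j) = (\<Sum>k<N. Pim $$ (i, k) * Pm $$ (k, j))"
    using carriers i j by (intro mult_entry) auto
  also have "\<dots> = (\<Sum>k<N. (if k = i then (if j = 0 \<or> i = j then 1 else 0) else 0)
        - (if k = 0 \<and> i \<noteq> 0 then (if j = 0 then 1 else 0) else 0))"
    using i j by (intro sum.cong) (auto simp: Pim_def Pm_def)
  also have "\<dots> = (if j = 0 \<or> i = j then 1 else 0) - (if i \<noteq> 0 then (if j = 0 then 1 else 0) else 0)"
    using i j N2 by (simp add: sum_subtractf sum.delta)
  also have "\<dots> = 1\<^sub>m N $$ (i, j)" using i j by auto
  finally show "(Pim * Pm) $$ (i, j) = 1\<^sub>m N $$ (i, j)" .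
qed (use carriers in auto)

lemma Pm_Pim: "Pm * Pim = 1\<^sub>m N"
  by (rule mat_mult_left_right_inverse[OF carriers(3) carriers(2) Pim_Pm])

lemma Am_Pm: "Am * Pm = Pm * Bm"
proof (rule eq_matI)
  fix i j assume "i < dim_row (Pm * Bm)" "j < dim_col (Pm * Bm)"
  then have i: "i < N" and j: "j < N" using carriers by auto
  have "(Am * Pm) $$ (i, j) = (\<Sum>k<N. Am $$ (i, k) * Pm $$ (k, j))"
    using carriers i j by (intro mult_entry) auto
  also have "\<dots> = (\<Sum>k<N. if j = 0 then a i k else (if k = j then a i k else 0))"
    using i j by (intro sum.cong) (auto simp: Am_def Pm_def)
  also have "\<dots> = (if j = 0 then 1 else a i j)"
    using i j rows[OF i] by (simp add: sum.delta)
  finally have l: "(Am * Pm) $$ (i, j) = (if j = 0 then 1 else a i j)" .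
  have "(Pm * Bm) $$ (i, j) = (\<Sum>k<N. Pm $$ (i, k) * Bm $$ (k, j))"
    using carriers i j by (intro mult_entry) auto
  also have "\<dots> = (\<Sum>k<N. (if k = 0 then Bm $$ (0, j) else 0) + (if k = i \<and> i \<noteq> 0 then Bm $$ (i, j) else 0))"
    using i j by (intro sum.cong) (auto simp: Pm_def)
  also have "\<dots> = Bm $$ (0, j) + (if i \<noteq> 0 then Bm $$ (i, j) else 0)"
    using i j N2 by (simp add: sum.distrib sum.delta)
  also have "\<dots> = (if j = 0 then 1 else a i j)"
    using i j N2 by (auto simp: Bm_def)
  finally show "(Am * Pm) $$ (i, j) = (Pm * Bm) $$ (i, j)" using l by simp
qed (use carriers in auto)

lemma similar: "similar_mat Am Bm"
proof -
  have "Am = Am * (Pm * Pim)" using carriers by (simp add: Pm_Pim)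
  also have "\<dots> = (Am * Pm) * Pim" using carriers by (simp add: assoc_mult_mat[of _ N N _ N _ N])
  also have "\<dots> = Pm * Bm * Pim" by (simp add: Am_Pm)
  finally have "Am = Pm * Bm * Pim" .
  then have "similar_mat_wit Am Bm Pm Pim"
    unfolding similar_mat_wit_def using carriers Pm_Pim Pim_Pm by (auto simp: Let_def)
  then show ?thesis unfolding similar_mat_def by blast
qed

definition B1 :: "real mat" where "B1 = mat 1 1 (\<lambda>_. 1)"
definition B2 :: "real mat" where "B2 = mat 1 (N - 1) (\<lambda>(_, j). a 0 (Suc j))"

lemma Bm_block: "Bm = four_block_mat B1 B2 (0\<^sub>m (N - 1) 1) Cm"
proof (rule eq_matI)
  fix i j assume "i < dim_row (four_block_mat B1 B2 (0\<^sub>m (N - 1) 1) Cm)"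
     "j < dim_col (four_block_mat B1 B2 (0\<^sub>m (N - 1) 1) Cm)"
  then have i: "i < N" and j: "j < N" using N2 by (auto simp: B1_def B2_def Cm_def)
  show "Bm $$ (i, j) = four_block_mat B1 B2 (0\<^sub>m (N - 1) 1) Cm $$ (i, j)"
    using i j N2 by (cases i; cases j) (auto simp: Bm_def B1_def B2_def Cm_def)
qed (use N2 in \<open>auto simp: Bm_def B1_def B2_def Cm_def\<close>)

lemma charpoly_split: "char_poly Am = [:-1, 1:] * char_poly Cm"
proof -
  have "char_poly Am = char_poly Bm" by (rule char_poly_similar[OF similar])
  also have "\<dots> = char_poly B1 * char_poly Cm"
    unfolding Bm_block by (rule char_poly_four_block_zeros_col) (auto simp: B1_def B2_def Cm_def)
  also have "char_poly B1 = [:-1, 1:]"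
    by (simp add: B1_def char_poly_defs det_def sign_def)
  finally show ?thesis .
qed

lemma sum_shift: "(\<Sum>j<N. h j) = h 0 + (\<Sum>j<N - 1. h (Suc j))"
proof -
  have "N = Suc (N - 1)" using N2 by simp
  then have "(\<Sum>j<N. h j) = (\<Sum>j<Suc (N - 1). h j)" by simp
  also have "\<dots> = h 0 + (\<Sum>j<N - 1. h (Suc j))" by (rule sum.lessThan_Suc_shift)
  finally show ?thesis .
qed

lemma Cm_mult: "i < N - 1 \<Longrightarrow> (Cm *\<^sub>v v) $ i = (\<Sum>j<N - 1. (a (Suc i) (Suc j) - a 0 (Suc j)) * v $ j)"
  if "v \<in> carrier_vec (N - 1)"
proof -
  assume i: "i < N - 1"
  have "(Cm *\<^sub>v v) $ i = row Cm i \<bullet> v" using i carriers by simp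
  also have "\<dots> = (\<Sum>k\<in>{0..<N - 1}. row Cm i $ k * v $ k)" unfolding scalar_prod_def using that by simp
  also have "\<dots> = (\<Sum>j<N - 1. (a (Suc i) (Suc j) - a 0 (Suc j)) * v $ j)"
    using i by (auto simp: atLeast0LessThan Cm_def intro!: sum.cong)
  finally show ?thesis .
qed

lemma root_C_EV: assumes "poly (char_poly Cm) e = 0" shows "e \<in> EVs"
proof -
  have "eigenvalue Cm e" using assms eigenvalue_root_char_poly[OF carriers(5)] by simp
  then obtain v where v: "v \<in> carrier_vec (N - 1)" "v \<noteq> 0\<^sub>v (N - 1)" "Cm *\<^sub>v v = e \<cdot>\<^sub>v v"
    unfolding eigenvalue_def eigenvector_def using carriers(5) by auto
  define w where "w = (\<lambda>k. if k = 0 then 0 else if k < N then v $ (k - 1) else (0::real))"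
  have Aw: "Aop N a w k = (\<Sum>j<N - 1. a k (Suc j) * v $ j)" for k
    unfolding Aop_def sum_shift by (auto simp: w_def intro!: sum.cong)
  define r where "r = Aop N a w 0"
  have eig: "Aop N a w k = e * w k + r" if k: "k < N" for k
  proof (cases k)
    case 0 then show ?thesis by (simp add: r_def w_def)
  next
    case (Suc i)
    then have i: "i < N - 1" using k by simp
    have "Aop N a w k - r = (\<Sum>j<N - 1. (a (Suc i) (Suc j) - a 0 (Suc j)) * v $ j)"
      unfolding r_def Aw Suc by (simp add: sum_subtractf left_diff_distrib)
    also have "\<dots> = (Cm *\<^sub>v v) $ i" using Cm_mult[OF v(1) i] by simp
    also have "\<dots> = e * v $ i" using v(3) v(1) i by simp
    also have "\<dots> = e * w k" using Suc k by (simp add: w_def)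
    finally show ?thesis by simp
  qed
  define c where "c = ipw N p w (\<lambda>_. 1) / ipw N p (\<lambda>_. 1) (\<lambda>_. 1)"
  have one_pos: "0 < ipw N p (\<lambda>_. 1) (\<lambda>_. 1)"
    using ipw_nonneg[of "\<lambda>_. 1"] ipw_zero[of "\<lambda>_. 1"] N2 by force
  have "ipw N p (Aop N a w) (\<lambda>_. 1) = ipw N p w (Aop N a (\<lambda>_. 1))" by (rule selfadj)
  also have "\<dots> = ipw N p w (\<lambda>_. 1)" by (rule ipw_cong) (simp_all add: Aop_one)
  finally have "ipw N p (\<lambda>k. e * w k + r * 1) (\<lambda>_. 1) = ipw N p w (\<lambda>_. 1)"
    using ipw_cong[of "Aop N a w" "\<lambda>k. e * w k + r * 1" "\<lambda>_. 1" "\<lambda>_. 1"] eig by simp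
  then have "e * ipw N p w (\<lambda>_. 1) + r * ipw N p (\<lambda>_. 1) (\<lambda>_. 1) = ipw N p w (\<lambda>_. 1)"
    unfolding ipw_add_left ipw_scale_left .
  then have r: "r = (1 - e) * c" unfolding c_def using one_pos by (simp add: field_simps)
  define f where "f = (\<lambda>k. w k - c)"
  have "Aop N a f k = e * f k" if k: "k < N" for k
  proof -
    have "Aop N a f k = Aop N a w k + (- c) * Aop N a (\<lambda>_. 1) k"
      unfolding f_def using Aop_add[of w "\<lambda>_. - c * 1"] Aop_scale[of "- c" "\<lambda>_. 1"] by simp
    also have "\<dots> = e * w k + r - c" using eig[OF k] Aop_one[OF k] by simp
    finally show ?thesis unfolding f_def r by (simp add: algebra_simps)
  qed
  moreover have "ipw N p f (\<lambda>_. 1) = 0"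
    unfolding f_def using ipw_diff_left[of w "\<lambda>_. c" "\<lambda>_. 1"] ipw_scale_left[of c "\<lambda>_. 1" "\<lambda>_. 1"] one_pos
    by (simp add: c_def)
  moreover have "\<exists>i<N. f i \<noteq> 0"
  proof (rule ccontr)
    assume "\<not> (\<exists>i<N. f i \<noteq> 0)"
    then have fz: "\<And>i. i < N \<Longrightarrow> w i = c" unfolding f_def by auto
    then have "c = 0" using fz[of 0] N2 by (simp add: w_def)
    have "\<And>i. i < N - 1 \<Longrightarrow> v $ i = 0"
    proof -
      fix i assume i: "i < N - 1"
      then have "w (Suc i) = c" using fz by simp
      moreover have "Suc i < N" using i by simp
      ultimately show "v $ i = 0" using \<open>c = 0\<close> by (simp add: w_def)
    qed
    then have "v = 0\<^sub>v (N - 1)" using v(1) by (intro eq_vecI) auto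
    then show False using v(2) by simp
  qed
  ultimately show ?thesis unfolding EVs_def by blast
qed

lemma EV_root_C: assumes "e \<in> EVs" shows "poly (char_poly Cm) e = 0"
proof -
  obtain g where g: "\<And>i. i < N \<Longrightarrow> Aop N a g i = e * g i" "\<exists>i<N. g i \<noteq> 0" "ipw N p g (\<lambda>_. 1) = 0"
    using assms unfolding EVs_def by blast
  define z where "z = vec (N - 1) (\<lambda>i. g (Suc i) - g 0)"
  have key: "(\<Sum>j<N - 1. a k (Suc j) * (g (Suc j) - g 0)) = Aop N a g k - g 0" if k: "k < N" for k
  proof -
    have "(\<Sum>j<N. a k j * (g j - g 0)) = (\<Sum>j<N. a k j * g j) - (\<Sum>j<N. a k j * g 0)"
      by (simp add: right_diff_distrib sum_subtractf)
    also have "(\<Sum>j<N. a k j * g 0) = (\<Sum>j<N. a k j) * g 0" by (rule sum_distrib_right[symmetric])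
    finally have "Aop N a g k - g 0 = (\<Sum>j<N. a k j * (g j - g 0))"
      unfolding Aop_def using rows[OF k] by simp
    also have "\<dots> = (\<Sum>j<N - 1. a k (Suc j) * (g (Suc j) - g 0))" unfolding sum_shift by simp
    finally show ?thesis by simp
  qed
  have z: "z \<in> carrier_vec (N - 1)" unfolding z_def by simp
  have "Cm *\<^sub>v z = e \<cdot>\<^sub>v z"
  proof (rule eq_vecI)
    fix i assume "i < dim_vec (e \<cdot>\<^sub>v z)"
    then have i: "i < N - 1" unfolding z_def by simp
    have "(Cm *\<^sub>v z) $ i = (\<Sum>j<N - 1. (a (Suc i) (Suc j) - a 0 (Suc j)) * z $ j)"
      by (rule Cm_mult[OF z i])
    also have "\<dots> = (\<Sum>j<N - 1. (a (Suc i) (Suc j) - a 0 (Suc j)) * (g (Suc j) - g 0))"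
      by (intro sum.cong refl) (simp add: z_def)
    also have "\<dots> = (\<Sum>j<N - 1. a (Suc i) (Suc j) * (g (Suc j) - g 0)) - (\<Sum>j<N - 1. a 0 (Suc j) * (g (Suc j) - g 0))"
      by (simp add: left_diff_distrib sum_subtractf)
    also have "\<dots> = (e * g (Suc i) - g 0) - (e * g 0 - g 0)"
    proof -
      have si: "Suc i < N" and z0: "0 < N" using i N2 by auto
      show ?thesis using key[OF si] key[OF z0] g(1)[OF si] g(1)[OF z0] by (simp only:)
    qed
    also have "\<dots> = e * (g (Suc i) - g 0)" by (simp add: algebra_simps)
    also have "\<dots> = (e \<cdot>\<^sub>v z) $ i" using i unfolding z_def by simp
    finally show "(Cm *\<^sub>v z) $ i = (e \<cdot>\<^sub>v z) $ i" .
  qed (use z carriers in auto)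
  moreover have "z \<noteq> 0\<^sub>v (N - 1)"
  proof
    assume "z = 0\<^sub>v (N - 1)"
    then have eq: "\<And>i. i < N - 1 \<Longrightarrow> g (Suc i) = g 0"
    proof -
      fix i assume zz: "z = 0\<^sub>v (N - 1)" and i: "i < N - 1"
      then have "z $ i = 0" by simp
      then show "g (Suc i) = g 0" using i unfolding z_def by simp
    qed
    have all: "\<And>i. i < N \<Longrightarrow> g i = g 0"
    proof -
      fix i assume "i < N"
      then show "g i = g 0" using eq[of "i - 1"] by (cases i) auto
    qed
    have "ipw N p g (\<lambda>_. 1) = ipw N p (\<lambda>_. g 0) (\<lambda>_. 1)" by (rule ipw_cong) (use all in blast)+
    also have "\<dots> = g 0 * ipw N p (\<lambda>_. 1) (\<lambda>_. 1)" using ipw_scale_left[of "g 0" "\<lambda>_. 1"] by simp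
    finally have "g 0 * ipw N p (\<lambda>_. 1) (\<lambda>_. 1) = 0" using g(3) by simp
    moreover have "0 < ipw N p (\<lambda>_. 1) (\<lambda>_. 1)"
      using ipw_nonneg[of "\<lambda>_. 1"] ipw_zero[of "\<lambda>_. 1"] N2 by force
    ultimately have "g 0 = 0" by simp
    moreover obtain i where "i < N" "g i \<noteq> 0" using g(2) by blast
    ultimately show False using all[OF \<open>i < N\<close>] by simp
  qed
  ultimately have "eigenvector Cm z e" unfolding eigenvector_def using z carriers(5) by auto
  then have "eigenvalue Cm e" unfolding eigenvalue_def by blast
  then show ?thesis using eigenvalue_root_char_poly[OF carriers(5)] by simp
qed

end



lemma prod_remove1: "x \<in> set xs \<Longrightarrow> prod_list (map f xs) = (f x :: 'b :: comm_monoid_mult) * prod_list (map f (remove1 x xs))"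
  by (induction xs) (auto simp: mult_ac)

lemma poly_lin_prod: "poly (prod_list (map (\<lambda>e. [:-e, 1:]) es)) (x :: 'a :: comm_ring_1) = prod_list (map (\<lambda>e. x - e) es)"
  by (induction es) (auto simp: algebra_simps)

lemma root_iff: "poly (prod_list (map (\<lambda>e. [:-e, 1:]) es)) (x :: 'a :: idom) = 0 \<longleftrightarrow> x \<in> set es"
  unfolding poly_lin_prod by (induction es) auto

lemma map_poly_L: "map_poly complex_of_real (prod_list (map (\<lambda>e. [:-e, 1:]) es)) = prod_list (map (\<lambda>e. [:-complex_of_real e, 1:]) es)"
proof -
  interpret mp: map_poly_comm_ring_hom "complex_of_real" ..
  show ?thesis
  proof (induction es)
    case (Cons e es)
    have "map_poly complex_of_real ([:-e, 1:] * prod_list (map (\<lambda>e. [:-e, 1:]) es))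
        = map_poly complex_of_real [:-e, 1:] * map_poly complex_of_real (prod_list (map (\<lambda>e. [:-e, 1:]) es))"
      by (rule mp.hom_mult)
    moreover have "map_poly complex_of_real [:-e, 1:] = [:-complex_of_real e, 1:]" by simp
    ultimately show ?case using Cons by (simp only: list.map prod_list.Cons)
  qed simp
qed

lemma prod_perm: "mset xs = mset ys \<Longrightarrow> prod_list (map f xs) = (prod_list (map f ys) :: 'b :: comm_monoid_mult)"
  by (metis mset_map prod_mset_prod_list)

context revk begin

lemma complex_eig_real: assumes ev: "eigenvector (map_mat complex_of_real Am) v z" shows "Im z = 0"
proof -
  let ?Ac = "map_mat complex_of_real Am"
  have v: "v \<in> carrier_vec N" "v \<noteq> 0\<^sub>v N" "?Ac *\<^sub>v v = z \<cdot>\<^sub>v v"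
    using ev carriers(1) unfolding eigenvector_def by auto
  have comp: "(\<Sum>j<N. complex_of_real (a i j) * v $ j) = z * v $ i" if i: "i < N" for i
  proof -
    have "(?Ac *\<^sub>v v) $ i = row ?Ac i \<bullet> v" using i carriers by simp
    also have "\<dots> = (\<Sum>k\<in>{0..<N}. row ?Ac i $ k * v $ k)" unfolding scalar_prod_def using v by simp
    also have "\<dots> = (\<Sum>j<N. complex_of_real (a i j) * v $ j)"
      using i by (auto simp: atLeast0LessThan Am_def intro!: sum.cong)
    finally show ?thesis using v(3) i v(1) by simp
  qed
  define S where "S = (\<Sum>i<N. \<Sum>j<N. complex_of_real (p i * a i j) * (cnj (v $ i) * v $ j))"
  define D where "D = (\<Sum>i<N. complex_of_real (p i) * (cnj (v $ i) * v $ i))"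
  have "S = (\<Sum>i<N. complex_of_real (p i) * cnj (v $ i) * (\<Sum>j<N. complex_of_real (a i j) * v $ j))"
    unfolding S_def by (simp add: sum_distrib_left mult_ac)
  also have "\<dots> = (\<Sum>i<N. complex_of_real (p i) * cnj (v $ i) * (z * v $ i))"
    by (intro sum.cong refl) (simp add: comp)
  also have "\<dots> = z * D" unfolding D_def by (simp add: sum_distrib_left mult_ac)
  finally have SD: "S = z * D" .
  have "cnj S = (\<Sum>i<N. \<Sum>j<N. complex_of_real (p i * a i j) * (v $ i * cnj (v $ j)))"
    unfolding S_def by (simp add: cnj_sum mult_ac)
  also have "\<dots> = (\<Sum>j<N. \<Sum>i<N. complex_of_real (p i * a i j) * (v $ i * cnj (v $ j)))"
    by (rule sum.swap)
  also have "\<dots> = (\<Sum>j<N. \<Sum>i<N. complex_of_real (p j * a j i) * (cnj (v $ j) * v $ i))"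
    by (intro sum.cong refl) (simp add: rev mult_ac)
  also have "\<dots> = S" unfolding S_def ..
  finally have "cnj S = S" .
  then have ImS: "Im S = 0" by (simp add: complex_eq_iff)
  define Dr where "Dr = (\<Sum>i<N. p i * (cmod (v $ i))^2)"
  have cn: "cnj z * z = complex_of_real ((cmod z)^2)" for z
    by (subst complex_norm_square) (simp add: mult.commute)
  have "D = (\<Sum>i<N. complex_of_real (p i) * complex_of_real ((cmod (v $ i))^2))"
    unfolding D_def by (simp only: cn)
  also have "\<dots> = complex_of_real Dr" unfolding Dr_def by (simp only: of_real_sum of_real_mult)
  finally have DDr: "D = complex_of_real Dr" .
  obtain i where i: "i < N" "v $ i \<noteq> 0"
    using v(1,2) by (metis eq_vecI carrier_vecD index_zero_vec(1,2))
  have "p i * (cmod (v $ i))^2 \<le> Dr" unfolding Dr_def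
    using i by (intro member_le_sum) (auto intro: mult_nonneg_nonneg pnn)
  moreover have "0 < p i * (cmod (v $ i))^2" using i ppos by simp
  ultimately have "Dr \<noteq> 0" by simp
  have "Im S = Im z * Dr" unfolding SD DDr by simp
  then show ?thesis using ImS \<open>Dr \<noteq> 0\<close> by simp
qed

lemma es_exists: "\<exists>es. sorted_wrt (\<ge>) es \<and> char_poly Am = prod_list (map (\<lambda>e. [:-e, 1:]) es)"
proof -
  let ?Ac = "map_mat complex_of_real Am"
  have Ac: "?Ac \<in> carrier_mat N N" using carriers by simp
  obtain as where as: "char_poly ?Ac = (\<Prod>a\<leftarrow>as. [:-a, 1:])" using char_poly_factorized[OF Ac] by blast
  have hom: "char_poly ?Ac = map_poly complex_of_real (char_poly Am)"
    by (rule of_real_hom.char_poly_hom[OF carriers(1)])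
  have real: "Im z = 0" if z: "z \<in> set as" for z
  proof -
    have "poly (char_poly ?Ac) z = 0" unfolding as using z root_iff by blast
    then have "eigenvalue ?Ac z" using eigenvalue_root_char_poly[OF Ac] by simp
    then obtain v where "eigenvector ?Ac v z" unfolding eigenvalue_def by blast
    then show ?thesis by (rule complex_eig_real)
  qed
  define es0 where "es0 = map Re as"
  have "map_poly complex_of_real (prod_list (map (\<lambda>e. [:-e, 1:]) es0)) = (\<Prod>a\<leftarrow>as. [:-a, 1:])"
    unfolding map_poly_L es0_def using real
    by (induction as) (auto simp: complex_eq_iff)
  then have eq: "map_poly complex_of_real (char_poly Am) = map_poly complex_of_real (prod_list (map (\<lambda>e. [:-e, 1:]) es0))"
    using hom as by simp
  have cp: "char_poly Am = prod_list (map (\<lambda>e. [:-e, 1:]) es0)"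
  proof (rule poly_eqI)
    fix n
    from arg_cong[OF eq, of "\<lambda>q. coeff q n"] show "coeff (char_poly Am) n = coeff (prod_list (map (\<lambda>e. [:-e, 1:]) es0)) n"
      by (simp add: coeff_map_poly)
  qed
  define es where "es = rev (sort es0)"
  have "sorted_wrt (\<ge>) es" unfolding es_def by (simp add: sorted_wrt_rev)
  moreover have "char_poly Am = prod_list (map (\<lambda>e. [:-e, 1:]) es)"
    unfolding cp es_def by (rule prod_perm) simp
  ultimately show ?thesis by blast
qed

lemma es_second: assumes s: "sorted_wrt (\<ge>) es" and cp: "char_poly Am = prod_list (map (\<lambda>e. [:-e, 1:]) es)"
  shows "es ! 1 = lstar"
proof -
  have len: "length es = N"
    using degree_monic_char_poly[OF carriers(1)] cp degree_linear_factors[of uminus es] by simp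
  have "poly (char_poly Am) 1 = 0" unfolding charpoly_split by simp
  then have one_in: "1 \<in> set es" using cp root_iff by metis
  have "[:-1, 1:] * char_poly Cm = [:-1, 1:] * prod_list (map (\<lambda>e. [:-e, 1:]) (remove1 1 es))"
    using cp charpoly_split prod_remove1[OF one_in, of "\<lambda>e. [:-e, 1:]"] by simp
  moreover have nz: "[:-1, 1:] \<noteq> (0 :: real poly)" by simp
  ultimately have cpC: "char_poly Cm = prod_list (map (\<lambda>e. [:-e, 1:]) (remove1 1 es))"
    using mult_left_cancel[OF nz] by blast
  have setC: "set (remove1 1 es) = EVs"
  proof
    show "set (remove1 1 es) \<subseteq> EVs"
    proof
      fix e assume "e \<in> set (remove1 1 es)"
      then have "poly (char_poly Cm) e = 0" unfolding cpC root_iff .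
      then show "e \<in> EVs" by (rule root_C_EV)
    qed
    show "EVs \<subseteq> set (remove1 1 es)"
    proof
      fix e assume "e \<in> EVs"
      then have "poly (char_poly Cm) e = 0" by (rule EV_root_C)
      then show "e \<in> set (remove1 1 es)" unfolding cpC root_iff .
    qed
  qed
  have le1: "e \<le> 1" if "e \<in> set es" for e
  proof (cases "e = 1")
    case False
    then have "e \<in> set (remove1 1 es)" using that by (simp add: in_set_remove1)
    then show ?thesis using setC EV_le lstar_le1 by force
  qed simp
  obtain x xs where es: "es = x # xs" using len N2 by (cases es) auto
  have "x = 1"
  proof -
    have "x \<le> 1" using le1 es by simp
    moreover have "1 \<le> x" using one_in s es by auto
    ultimately show ?thesis by simp
  qed
  then have "remove1 1 es = xs" using es by simp
  then have setxs: "set xs = EVs" using setC by simp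
  obtain y ys where xs: "xs = y # ys" using len N2 es by (cases xs) auto
  have "y \<le> lstar" using setxs xs EV_le by auto
  moreover have "lstar \<le> y"
  proof -
    have "lstar \<in> set xs" using setxs lstar_EV by simp
    then show ?thesis using s es xs by auto
  qed
  ultimately show ?thesis using es xs by simp
qed

end



lemma lstar_compare:
  assumes A: "revk N a p" and B: "revk N b p" and c: "0 \<le> c"
  and le: "\<And>i j. i < N \<Longrightarrow> j < N \<Longrightarrow> i \<noteq> j \<Longrightarrow> c * b i j \<le> a i j"
  shows "c * (1 - revk.lstar N b p) \<le> 1 - revk.lstar N a p"
proof -
  interpret A: revk N a p by (rule A)
  interpret B: revk N b p by (rule B)
  define f where "f = A.fstar"
  have f1: "ipw N p f (\<lambda>_. 1) = 0" and f2: "ipw N p f f = 1" unfolding f_def using A.fstar_props by auto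
  have "1 - A.lstar = Dir N a p f" using A.Dir_eq[of f] f2 unfolding A.lstar_def f_def by simp
  moreover have "1 - Qf N b p f = Dir N b p f" using B.Dir_eq[of f] f2 by simp
  moreover have "Qf N b p f \<le> B.lstar" using B.rayleigh_le[OF f1] f2 by simp
  moreover have "c * Dir N b p f \<le> Dir N a p f"
  proof -
    have "c * (\<Sum>i<N. \<Sum>j<N. p i * b i j * (f i - f j)^2) \<le> (\<Sum>i<N. \<Sum>j<N. p i * a i j * (f i - f j)^2)"
      unfolding sum_distrib_left
    proof (intro sum_mono)
      fix i j assume i: "i \<in> {..<N}" and j: "j \<in> {..<N}"
      show "c * (p i * b i j * (f i - f j)^2) \<le> p i * a i j * (f i - f j)^2"
      proof (cases "i = j")
        case False
        then have "c * b i j \<le> a i j" using le i j by auto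
        moreover have "0 \<le> p i * (f i - f j)^2" using A.pnn i by simp
        ultimately have "(c * b i j) * (p i * (f i - f j)^2) \<le> a i j * (p i * (f i - f j)^2)"
          by (rule mult_right_mono)
        then show ?thesis by (simp add: mult_ac)
      qed simp
    qed
    then show ?thesis unfolding Dir_def by simp
  qed
  ultimately have e: "1 - A.lstar = Dir N a p f" "1 - Qf N b p f = Dir N b p f" "Qf N b p f \<le> B.lstar"
    "c * Dir N b p f \<le> Dir N a p f" by auto
  have "c * (1 - B.lstar) \<le> c * (1 - Qf N b p f)" using c e(3) by (intro mult_left_mono) auto
  then show ?thesis using e by simp
qed

lemma enum_states: assumes "finite T" shows "distinct (enum_states T) \<and> set (enum_states T) = T"
proof -
  obtain xs where "set xs = T \<and> distinct xs" using finite_distinct_list[OF assms] by blast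
  then have "\<exists>xs. distinct xs \<and> set xs = T" by blast
  then show ?thesis unfolding enum_states_def by (rule someI_ex)
qed

lemma revk_from_kernel:
  assumes fin: "finite T" and card: "2 \<le> card T"
  and pos: "\<And>x. x \<in> T \<Longrightarrow> 0 < w x"
  and rv: "\<And>x y. x \<in> T \<Longrightarrow> y \<in> T \<Longrightarrow> w x * K x y = w y * K y x"
  and rw: "\<And>x. x \<in> T \<Longrightarrow> (\<Sum>y\<in>T. K x y) = 1"
  and od: "\<And>x y. x \<in> T \<Longrightarrow> y \<in> T \<Longrightarrow> x \<noteq> y \<Longrightarrow> 0 \<le> K x y"
  shows "revk (length (enum_states T)) (\<lambda>i j. K (enum_states T ! i) (enum_states T ! j)) (\<lambda>i. w (enum_states T ! i))"
proof -
  define xs where "xs = enum_states T"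
  have xs: "distinct xs" "set xs = T" using enum_states[OF fin] unfolding xs_def by auto
  have len: "length xs = card T" using xs distinct_card by fastforce
  have mem: "\<And>i. i < length xs \<Longrightarrow> xs ! i \<in> T" using xs by auto
  have bij: "bij_betw ((!) xs) {..<length xs} T" by (rule bij_betw_nth) (use xs in auto)
  show ?thesis unfolding xs_def[symmetric]
  proof
    show "2 \<le> length xs" using len card by simp
    show "\<And>i. i < length xs \<Longrightarrow> 0 < w (xs ! i)" using pos mem by auto
    show "\<And>i j. i < length xs \<Longrightarrow> j < length xs \<Longrightarrow> w (xs ! i) * K (xs ! i) (xs ! j) = w (xs ! j) * K (xs ! j) (xs ! i)"
      using rv mem by auto
    show "\<And>i. i < length xs \<Longrightarrow> (\<Sum>j<length xs. K (xs ! i) (xs ! j)) = 1"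
    proof -
      fix i assume i: "i < length xs"
      have "(\<Sum>j<length xs. K (xs ! i) (xs ! j)) = (\<Sum>y\<in>T. K (xs ! i) y)"
        by (rule sum.reindex_bij_betw[OF bij])
      also have "\<dots> = 1" using rw mem i by auto
      finally show "(\<Sum>j<length xs. K (xs ! i) (xs ! j)) = 1" .
    qed
    show "\<And>i j. i < length xs \<Longrightarrow> j < length xs \<Longrightarrow> i \<noteq> j \<Longrightarrow> 0 \<le> K (xs ! i) (xs ! j)"
      using od mem xs(1) by (simp add: nth_eq_iff_index_eq)
  qed
qed

lemma second_eigenvalue_lstar:
  assumes R: "revk (length (enum_states T)) (\<lambda>i j. K (enum_states T ! i) (enum_states T ! j)) w"
  shows "second_eigenvalue T K = revk.lstar (length (enum_states T)) (\<lambda>i j. K (enum_states T ! i) (enum_states T ! j)) w"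
proof -
  interpret R: revk "length (enum_states T)" "\<lambda>i j. K (enum_states T ! i) (enum_states T ! j)" w by (rule R)
  have tm: "trans_mat T K = R.Am" unfolding trans_mat_def R.Am_def Let_def by simp
  have "\<exists>es. sorted_wrt (\<ge>) es \<and> char_poly R.Am = prod_list (map (\<lambda>e. [:-e, 1:]) es)"
    by (rule R.es_exists)
  then have "sorted_wrt (\<ge>) (eigenvalues_desc R.Am) \<and>
      char_poly R.Am = prod_list (map (\<lambda>e. [:-e, 1:]) (eigenvalues_desc R.Am))"
    unfolding eigenvalues_desc_def by (rule someI_ex)
  then have "eigenvalues_desc R.Am ! 1 = R.lstar" using R.es_second by blast
  then show ?thesis unfolding second_eigenvalue_def tm .
qed

lemma lstar_le1: "revk N a p \<Longrightarrow> revk.lstar N a p \<le> 1"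
  using revk.lstar_le1 by blast

lemma inv_cmp1:
  fixes gA gB c d :: real
  assumes "0 \<le> gA" "0 \<le> gB" "0 < c" "c * gB \<le> gA" "0 < d" "d * gA \<le> gB"
  shows "c * (1 / gA) \<le> 1 / gB"
proof (cases "gB = 0")
  case True
  then have "d * gA \<le> 0" using assms by simp
  then have "gA \<le> 0" using assms(5) by (simp add: mult_le_0_iff)
  then have "gA = 0" using assms by simp
  then show ?thesis using True by simp
next
  case False
  then have "0 < gB" using assms by simp
  then have "0 < c * gB" using assms by simp
  then have "0 < gA" using assms by linarith
  then show ?thesis using assms \<open>0 < gB\<close> by (simp add: field_simps)
qed

lemma inv_cmp2:
  fixes gA gB C d :: real
  assumes "0 \<le> gA" "0 \<le> gB" "0 < C" "gA \<le> C * gB" "0 < d" "d * gB \<le> gA"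
  shows "1 / gB \<le> C * (1 / gA)"
proof (cases "gA = 0")
  case True
  then have "d * gB \<le> 0" using assms by simp
  then have "gB \<le> 0" using assms(5) by (simp add: mult_le_0_iff)
  then have "gB = 0" using assms by simp
  then show ?thesis using True by simp
next
  case False
  then have "0 < gA" using assms by simp
  then have "0 < C * gB" using assms by linarith
  then have "0 < gB" using assms by (simp add: zero_less_mult_iff)
  then show ?thesis using assms \<open>0 < gA\<close> by (simp add: field_simps)
qed

lemma kernel_rows: "finite S \<Longrightarrow> x \<in> S \<Longrightarrow> (\<Sum>y\<in>S. kernel_of S Q x y) = 1"
proof -
  assume fin: "finite S" and x: "x \<in> S"
  have "(\<Sum>y\<in>S. kernel_of S Q x y) = kernel_of S Q x x + (\<Sum>y\<in>S - {x}. kernel_of S Q x y)"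
    using sum.remove[OF fin x] by simp
  also have "(\<Sum>y\<in>S - {x}. kernel_of S Q x y) = (\<Sum>y\<in>S - {x}. Q x y)"
    by (intro sum.cong) (auto simp: kernel_of_def)
  finally show ?thesis by (simp add: kernel_of_def)
qed

lemma kernel_off: "x \<noteq> y \<Longrightarrow> kernel_of S Q x y = Q x y"
  by (simp add: kernel_of_def)

section \<open>Tables\<close>

lemma tables_out: "x \<in> tables lam mu \<Longrightarrow> length lam \<le> i \<or> length mu \<le> j \<Longrightarrow> x i j = 0"
  unfolding tables_def by auto

lemma tables_row: "x \<in> tables lam mu \<Longrightarrow> i < length lam \<Longrightarrow> (\<Sum>j<length mu. x i j) = lam ! i"
  unfolding tables_def by auto

lemma tables_col: "x \<in> tables lam mu \<Longrightarrow> j < length mu \<Longrightarrow> (\<Sum>i<length lam. x i j) = mu ! j"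
  unfolding tables_def by auto

lemma entry_le_row: assumes "x \<in> tables lam mu" "i < length lam" shows "x i j \<le> lam ! i"
proof (cases "j < length mu")
  case True
  then have "x i j \<le> (\<Sum>j<length mu. x i j)" by (intro member_le_sum) auto
  then show ?thesis using tables_row[OF assms] by simp
next
  case False then show ?thesis using tables_out[OF assms(1)] by simp
qed

lemma entry_le_col: assumes "x \<in> tables lam mu" "j < length mu" shows "x i j \<le> mu ! j"
proof (cases "i < length lam")
  case True
  then have "x i j \<le> (\<Sum>i<length lam. x i j)" by (intro member_le_sum) auto
  then show ?thesis using tables_col[OF assms] by simp
next
  case False then show ?thesis using tables_out[OF assms(1)] by simp
qed

lemma entry_le_n: assumes "x \<in> tables lam mu" shows "x i j \<le> sum_list lam"
proof (cases "i < length lam")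
  case True
  then show ?thesis using entry_le_row[OF assms True, of j] elem_le_sum_list[OF True] by linarith
next
  case False then show ?thesis using tables_out[OF assms] by simp
qed

lemma finite_tables: "finite (tables lam mu)"
proof -
  define B where "B = sum_list lam"
  define R where "R = {..<length lam} \<times> {..<length mu}"
  define S where "S = {x :: table. (\<forall>i j. x i j \<le> B) \<and> (\<forall>i j. length lam \<le> i \<or> length mu \<le> j \<longrightarrow> x i j = 0)}"
  define f where "f = (\<lambda>x :: table. restrict (\<lambda>(i, j). x i j) R)"
  have "f ` S \<subseteq> PiE R (\<lambda>_. {..B})" unfolding f_def S_def by auto
  then have fin: "finite (f ` S)" by (rule finite_subset) (auto simp: R_def intro!: finite_PiE)
  have "inj_on f S"
  proof (rule inj_onI)
    fix x y assume x: "x \<in> S" and y: "y \<in> S" and eq: "f x = f y"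
    show "x = y"
    proof (intro ext)
      fix i j
      show "x i j = y i j"
      proof (cases "i < length lam \<and> j < length mu")
        case True
        then have "(i, j) \<in> R" unfolding R_def by auto
        then show ?thesis using fun_cong[OF eq, of "(i, j)"] unfolding f_def by simp
      next
        case False then show ?thesis using x y unfolding S_def by auto
      qed
    qed
  qed
  then have "finite S" using fin finite_imageD by blast
  moreover have "tables lam mu \<subseteq> S" unfolding S_def B_def using entry_le_n tables_out by blast
  ultimately show ?thesis by (rule finite_subset[rotated])
qed


section \<open>Moves\<close>

lemma is_move_app: "is_move I J q x y \<Longrightarrow> int (y i j) = Fmove q x i j"
  unfolding is_move_def by (metis (mono_tags, lifting))

lemma move_cells:
  assumes m: "is_move I J (i1, j1, i2, j2) x y"
  shows "i1 < I" "i2 < I" "j1 < J" "j2 < J" "i1 \<noteq> i2" "j1 \<noteq> j2"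
    "y i1 j1 + 1 = x i1 j1" "y i2 j2 + 1 = x i2 j2" "y i1 j2 = x i1 j2 + 1" "y i2 j1 = x i2 j1 + 1"
    "\<And>i j. (i, j) \<noteq> (i1, j1) \<Longrightarrow> (i, j) \<noteq> (i2, j2) \<Longrightarrow> (i, j) \<noteq> (i1, j2) \<Longrightarrow> (i, j) \<noteq> (i2, j1) \<Longrightarrow> y i j = x i j"
proof -
  have q: "(i1, j1, i2, j2) \<in> quads I J" using m unfolding is_move_def by simp
  then show "i1 < I" "i2 < I" "j1 < J" "j2 < J" and d: "i1 \<noteq> i2" "j1 \<noteq> j2" unfolding quads_def by auto
  have F: "\<And>i j. int (y i j) = Fmove (i1, j1, i2, j2) x i j" using is_move_app[OF m] .
  show "y i1 j1 + 1 = x i1 j1" using F[of i1 j1] d unfolding Fmove_def by simp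
  show "y i2 j2 + 1 = x i2 j2" using F[of i2 j2] d unfolding Fmove_def by simp
  show "y i1 j2 = x i1 j2 + 1" using F[of i1 j2] d unfolding Fmove_def by simp
  show "y i2 j1 = x i2 j1 + 1" using F[of i2 j1] d unfolding Fmove_def by simp
  show "\<And>i j. (i, j) \<noteq> (i1, j1) \<Longrightarrow> (i, j) \<noteq> (i2, j2) \<Longrightarrow> (i, j) \<noteq> (i1, j2) \<Longrightarrow> (i, j) \<noteq> (i2, j1) \<Longrightarrow> y i j = x i j"
  proof -
    fix i j assume "(i, j) \<noteq> (i1, j1)" "(i, j) \<noteq> (i2, j2)" "(i, j) \<noteq> (i1, j2)" "(i, j) \<noteq> (i2, j1)"
    then have "int (y i j) = int (x i j)" using F[of i j] unfolding Fmove_def by simp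
    then show "y i j = x i j" by simp
  qed
qed

lemma move_ne: "is_move I J (i1, j1, i2, j2) x y \<Longrightarrow> y \<noteq> x"
  using move_cells(7) by fastforce

lemma move_rev:
  assumes m: "is_move I J (i1, j1, i2, j2) x y"
  shows "is_move I J (i1, j2, i2, j1) y x"
proof -
  have q: "(i1, j1, i2, j2) \<in> quads I J" using m unfolding is_move_def by simp
  then have q': "(i1, j2, i2, j1) \<in> quads I J" unfolding quads_def by auto
  have d: "i1 \<noteq> i2" "j1 \<noteq> j2" using q unfolding quads_def by auto
  have F: "\<And>i j. int (y i j) = Fmove (i1, j1, i2, j2) x i j" using is_move_app[OF m] .
  have "(\<lambda>i j. int (x i j)) = Fmove (i1, j2, i2, j1) y"
  proof (intro ext)
    fix i j
    show "int (x i j) = Fmove (i1, j2, i2, j1) y i j"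
      using F[of i j] d unfolding Fmove_def by auto
  qed
  then show ?thesis using q' unfolding is_move_def by simp
qed

lemma move_rate_unique:
  assumes m: "is_move I J (i1, j1, i2, j2) x y" and m': "is_move I J (k1, l1, k2, l2) x y"
  shows "x k1 l1 * x k2 l2 = x i1 j1 * x i2 j2"
proof -
  have q: "(i1, j1, i2, j2) \<in> quads I J" using m unfolding is_move_def by simp
  have d: "i1 \<noteq> i2" "j1 \<noteq> j2" using q unfolding quads_def by auto
  have q': "(k1, l1, k2, l2) \<in> quads I J" using m' unfolding is_move_def by simp
  have d': "k1 \<noteq> k2" "l1 \<noteq> l2" using q' unfolding quads_def by auto
  have F: "\<And>i j. int (y i j) = Fmove (i1, j1, i2, j2) x i j" using is_move_app[OF m] .
  have c1: "(k1, l1) = (i1, j1) \<or> (k1, l1) = (i2, j2)"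
  proof -
    have "int (y k1 l1) = int (x k1 l1) - 1" using move_cells(7)[OF m'] by simp
    then show ?thesis using F[of k1 l1] d unfolding Fmove_def by (auto split: if_splits)
  qed
  have c2: "(k2, l2) = (i1, j1) \<or> (k2, l2) = (i2, j2)"
  proof -
    have "int (y k2 l2) = int (x k2 l2) - 1" using move_cells(8)[OF m'] by simp
    then show ?thesis using F[of k2 l2] d unfolding Fmove_def by (auto split: if_splits)
  qed
  show ?thesis using c1 c2 d' by auto
qed

abbreviation "nn lam \<equiv> sum_list lam"

lemma PFY_off_move:
  assumes m: "is_move (length lam) (length mu) (i1, j1, i2, j2) x y"
  shows "PFY_off lam mu x y = 2 * real (x i1 j1) * real (x i2 j2) / real (sum_list lam)^2"
proof -
  let ?P = "\<lambda>q. is_move (length lam) (length mu) q x y"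
  have ex: "\<exists>q. ?P q" using m by blast
  have ne: "y \<noteq> x" using move_ne[OF m] .
  obtain k1 l1 k2 l2 where qs: "(SOME q. ?P q) = (k1, l1, k2, l2)" by (cases "SOME q. ?P q") auto
  have m': "?P (k1, l1, k2, l2)" using someI_ex[OF ex] unfolding qs .
  have r: "real (x k1 l1) * real (x k2 l2) = real (x i1 j1) * real (x i2 j2)"
    using move_rate_unique[OF m m'] by (metis of_nat_mult)
  show ?thesis unfolding PFY_off_def using ex ne qs r by (simp add: mult.assoc)
qed

lemma PFY_off_nomove:
  "\<not> (\<exists>q. is_move (length lam) (length mu) q x y) \<Longrightarrow> PFY_off lam mu x y = 0"
  unfolding PFY_off_def by auto

lemma PFY_off_nonneg: "0 \<le> PFY_off lam mu x y"
  unfolding PFY_off_def by (auto split: prod.splits)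

lemma PU_off_nonneg: "0 \<le> PU_off lam mu x y"
  unfolding PU_off_def by auto

lemma piFY_pos: "0 < piFY lam mu x"
  unfolding piFY_def by (intro divide_pos_pos mult_pos_pos prod_pos) auto

lemma prod_two_cells:
  fixes u v :: real
  assumes "c1 \<in> R" "c2 \<in> R" "c1 \<noteq> c2" "finite R"
  shows "(\<Prod>c\<in>R. (if c = c1 then u else 1) * (if c = c2 then v else 1)) = u * v"
  using assms by (simp add: prod.distrib prod.delta)

lemma piFY_move:
  assumes m: "is_move (length lam) (length mu) (i1, j1, i2, j2) x y"
  shows "piFY lam mu x * (real (x i1 j1) * real (x i2 j2)) = piFY lam mu y * (real (y i1 j2) * real (y i2 j1))"
proof -
  note mc = move_cells[OF m]
  define R where "R = {..<length lam} \<times> {..<length mu}"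
  have fin: "finite R" unfolding R_def by simp
  define F where "F = (\<lambda>z :: table. (\<Prod>i<length lam. \<Prod>j<length mu. (fact (z i j) :: real)))"
  have FR: "\<And>z. F z = (\<Prod>c\<in>R. fact (z (fst c) (snd c)))"
    unfolding F_def R_def by (simp add: prod.cartesian_product case_prod_beta)
  define rx where "rx = (\<lambda>c. (if c = (i1, j1) then real (x i1 j1) else 1) * (if c = (i2, j2) then real (x i2 j2) else 1))"
  define ry where "ry = (\<lambda>c. (if c = (i1, j2) then real (y i1 j2) else 1) * (if c = (i2, j1) then real (y i2 j1) else 1))"
  have cell: "(fact (x (fst c) (snd c)) :: real) * ry c = fact (y (fst c) (snd c)) * rx c" for c
  proof -
    obtain i j where c: "c = (i, j)" by (cases c)
    consider "c = (i1, j1)" | "c = (i2, j2)" | "c = (i1, j2)" | "c = (i2, j1)"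
      | "c \<noteq> (i1, j1)" "c \<noteq> (i2, j2)" "c \<noteq> (i1, j2)" "c \<noteq> (i2, j1)" by blast
    then show ?thesis
    proof cases
      case 1
      have "x i1 j1 = Suc (y i1 j1)" using mc(7) by simp
      then show ?thesis using 1 mc(5,6) unfolding rx_def ry_def by (simp add: fact_Suc)
    next
      case 2
      have "x i2 j2 = Suc (y i2 j2)" using mc(8) by simp
      then show ?thesis using 2 mc(5,6) unfolding rx_def ry_def by (simp add: fact_Suc)
    next
      case 3
      have "y i1 j2 = Suc (x i1 j2)" using mc(9) by simp
      then show ?thesis using 3 mc(5,6) unfolding rx_def ry_def by (simp add: fact_Suc)
    next
      case 4
      have "y i2 j1 = Suc (x i2 j1)" using mc(10) by simp
      then show ?thesis using 4 mc(5,6) unfolding rx_def ry_def by (simp add: fact_Suc)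
    qed (auto simp: rx_def ry_def c mc(11))
  qed
  have inR: "(i1, j1) \<in> R" "(i2, j2) \<in> R" "(i1, j2) \<in> R" "(i2, j1) \<in> R"
    unfolding R_def using mc(1-4) by auto
  have "F x * (real (y i1 j2) * real (y i2 j1)) = (\<Prod>c\<in>R. fact (x (fst c) (snd c))) * (\<Prod>c\<in>R. ry c)"
    unfolding FR ry_def using prod_two_cells[OF inR(3,4) _ fin] mc(5) by simp
  also have "\<dots> = (\<Prod>c\<in>R. fact (x (fst c) (snd c)) * ry c)" by (simp add: prod.distrib)
  also have "\<dots> = (\<Prod>c\<in>R. fact (y (fst c) (snd c)) * rx c)" using cell by simp
  also have "\<dots> = (\<Prod>c\<in>R. fact (y (fst c) (snd c))) * (\<Prod>c\<in>R. rx c)" by (simp add: prod.distrib)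
  also have "\<dots> = F y * (real (x i1 j1) * real (x i2 j2))"
    unfolding FR rx_def using prod_two_cells[OF inR(1,2) _ fin] mc(5) by simp
  finally have key: "F x * (real (y i1 j2) * real (y i2 j1)) = F y * (real (x i1 j1) * real (x i2 j2))" .
  have Fpos: "0 < F z" for z unfolding F_def by (intro prod_pos) auto
  define C where "C = (\<Prod>i<length lam. (fact (lam ! i) :: real)) * (\<Prod>j<length mu. fact (mu ! j))"
  define D where "D = (fact (sum_list lam) :: real)"
  have Dpos: "0 < D" unfolding D_def by simp
  have pz: "\<And>z. piFY lam mu z = C / (D * F z)" unfolding piFY_def C_def D_def F_def by simp
  show ?thesis unfolding pz using key Fpos[of x] Fpos[of y] Dpos
    by (simp add: field_simps)
qed


lemma ex_move_sym: "(\<exists>q. is_move I J q x y) \<longleftrightarrow> (\<exists>q. is_move I J q y x)"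
proof
  assume "\<exists>q. is_move I J q x y"
  then obtain i1 j1 i2 j2 where "is_move I J (i1, j1, i2, j2) x y" by (metis prod_cases4)
  then show "\<exists>q. is_move I J q y x" using move_rev by blast
next
  assume "\<exists>q. is_move I J q y x"
  then obtain i1 j1 i2 j2 where "is_move I J (i1, j1, i2, j2) y x" by (metis prod_cases4)
  then show "\<exists>q. is_move I J q x y" using move_rev by blast
qed

lemma PU_off_sym: "x \<in> tables lam mu \<Longrightarrow> y \<in> tables lam mu \<Longrightarrow> PU_off lam mu x y = PU_off lam mu y x"
  unfolding PU_off_def using ex_move_sym by metis

lemma entries_finite: "finite {x i j | x i j. x \<in> tables lam mu \<and> i < length lam \<and> j < length mu}"
  by (rule finite_subset[of _ "{..sum_list lam}"]) (auto intro: entry_le_n)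

lemma entries_pos_finite: "finite {x i j | x i j. x \<in> tables lam mu \<and> i < length lam \<and> j < length mu \<and> 0 < x i j}"
  by (rule finite_subset[of _ "{..sum_list lam}"]) (auto intro: entry_le_n)

lemma entry_le_max: "x \<in> tables lam mu \<Longrightarrow> i < length lam \<Longrightarrow> j < length mu \<Longrightarrow> x i j \<le> max_entry lam mu"
  unfolding max_entry_def by (rule Max_ge[OF entries_finite]) blast

lemma move_case:
  assumes m: "is_move (length lam) (length mu) (i1, j1, i2, j2) x y"
    and x: "x \<in> tables lam mu" and y: "y \<in> tables lam mu"
  defines "u \<equiv> real (x i1 j1) * real (x i2 j2)" and "v \<equiv> real (y i1 j2) * real (y i2 j1)"
  shows "PU_off lam mu x y = 2 / (real (length lam * length mu))^2"
    "PFY_off lam mu x y = 2 * u / real (sum_list lam)^2"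
    "PFY_off lam mu y x = 2 * v / real (sum_list lam)^2"
    "1 \<le> u" "1 \<le> v" "u \<le> (real (max_entry lam mu))^2" "v \<le> (real (max_entry lam mu))^2"
    "piFY lam mu y / piFY lam mu x = u / v"
proof -
  note mc = move_cells[OF m]
  show "PU_off lam mu x y = 2 / (real (length lam * length mu))^2"
    unfolding PU_off_def using m move_ne[OF m] y by auto
  show "PFY_off lam mu x y = 2 * u / real (sum_list lam)^2"
    unfolding PFY_off_move[OF m] u_def by (simp add: mult.assoc)
  show "PFY_off lam mu y x = 2 * v / real (sum_list lam)^2"
    unfolding PFY_off_move[OF move_rev[OF m]] v_def by (simp add: mult.assoc)
  have "1 \<le> x i1 j1" "1 \<le> x i2 j2" using mc(7,8) by auto
  then show u1: "1 \<le> u" unfolding u_def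
    by (metis mult_mono' of_nat_1 of_nat_le_iff mult_1 zero_le_one)
  have "1 \<le> y i1 j2" "1 \<le> y i2 j1" using mc(9,10) by auto
  then show v1: "1 \<le> v" unfolding v_def
    by (metis mult_mono' of_nat_1 of_nat_le_iff mult_1 zero_le_one)
  let ?M = "real (max_entry lam mu)"
  have "real (x i1 j1) \<le> ?M" "real (x i2 j2) \<le> ?M"
    using entry_le_max[OF x] mc(1-4) by auto
  then show "u \<le> ?M^2" unfolding u_def power2_eq_square by (intro mult_mono) auto
  have "real (y i1 j2) \<le> ?M" "real (y i2 j1) \<le> ?M"
    using entry_le_max[OF y] mc(1-4) by auto
  then show "v \<le> ?M^2" unfolding v_def power2_eq_square by (intro mult_mono) auto
  have "piFY lam mu x * u = piFY lam mu y * v" using piFY_move[OF m] unfolding u_def v_def .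
  then show "piFY lam mu y / piFY lam mu x = u / v"
    using piFY_pos[of lam mu x] v1 by (simp add: field_simps)
qed

lemma no_move_case:
  assumes "\<not> (\<exists>q. is_move (length lam) (length mu) q x y)"
  shows "PU_off lam mu x y = 0" "PFY_off lam mu x y = 0" "PFY_off lam mu y x = 0"
  using assms ex_move_sym[of "length lam" "length mu" x y]
  by (auto simp: PU_off_def PFY_off_nomove)

lemma off_vals:
  assumes "x \<noteq> y"
  shows "P_U lam mu x y = PU_off lam mu x y" "P_FY lam mu x y = PFY_off lam mu x y"
    "P_FY lam mu y x = PFY_off lam mu y x"
    "P_UM lam mu x y = min (PFY_off lam mu x y) (PFY_off lam mu y x)"
    "P_FYM lam mu x y = PU_off lam mu x y * min 1 (piFY lam mu y / piFY lam mu x)"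
  using assms by (auto simp: P_U_def P_FY_def P_UM_def P_FYM_def kernel_off)

lemma min_scale: "0 < (a::real) \<Longrightarrow> a * min 1 (b / a) = min a b"
  by (auto simp: min_def field_simps)

context
  fixes lam mu :: "nat list"
  assumes card2: "2 \<le> card (tables lam mu)"
begin

lemma inst_U: "revk (length (enum_states (tables lam mu)))
   (\<lambda>i j. P_U lam mu (enum_states (tables lam mu) ! i) (enum_states (tables lam mu) ! j)) (\<lambda>i. 1)"
proof -
  have "revk (length (enum_states (tables lam mu)))
   (\<lambda>i j. P_U lam mu (enum_states (tables lam mu) ! i) (enum_states (tables lam mu) ! j)) (\<lambda>i. (\<lambda>_. 1::real) (enum_states (tables lam mu) ! i))"
  proof (rule revk_from_kernel[OF finite_tables card2])
    fix x y assume "x \<in> tables lam mu" "y \<in> tables lam mu"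
    then show "1 * P_U lam mu x y = 1 * P_U lam mu y x"
      by (cases "x = y") (auto simp: off_vals PU_off_sym)
  next
    fix x assume "x \<in> tables lam mu"
    then show "(\<Sum>y\<in>tables lam mu. P_U lam mu x y) = 1" unfolding P_U_def by (rule kernel_rows[OF finite_tables])
  next
    fix x y :: table assume "x \<noteq> y" then show "0 \<le> P_U lam mu x y" by (simp add: off_vals PU_off_nonneg)
  qed simp
  then show ?thesis by simp
qed

lemma inst_UM: "revk (length (enum_states (tables lam mu)))
   (\<lambda>i j. P_UM lam mu (enum_states (tables lam mu) ! i) (enum_states (tables lam mu) ! j)) (\<lambda>i. 1)"
proof -
  have "revk (length (enum_states (tables lam mu)))
   (\<lambda>i j. P_UM lam mu (enum_states (tables lam mu) ! i) (enum_states (tables lam mu) ! j)) (\<lambda>i. (\<lambda>_. 1::real) (enum_states (tables lam mu) ! i))"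
  proof (rule revk_from_kernel[OF finite_tables card2])
    fix x y assume "x \<in> tables lam mu" "y \<in> tables lam mu"
    then show "1 * P_UM lam mu x y = 1 * P_UM lam mu y x"
      by (cases "x = y") (auto simp: off_vals min.commute)
  next
    fix x assume "x \<in> tables lam mu"
    then show "(\<Sum>y\<in>tables lam mu. P_UM lam mu x y) = 1" unfolding P_UM_def by (rule kernel_rows[OF finite_tables])
  next
    fix x y :: table assume "x \<noteq> y" then show "0 \<le> P_UM lam mu x y" by (simp add: off_vals PFY_off_nonneg)
  qed simp
  then show ?thesis by simp
qed

lemma inst_FY: "revk (length (enum_states (tables lam mu)))
   (\<lambda>i j. P_FY lam mu (enum_states (tables lam mu) ! i) (enum_states (tables lam mu) ! j))
   (\<lambda>i. piFY lam mu (enum_states (tables lam mu) ! i))"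
proof (rule revk_from_kernel[OF finite_tables card2])
  fix x y assume x: "x \<in> tables lam mu" and y: "y \<in> tables lam mu"
  show "piFY lam mu x * P_FY lam mu x y = piFY lam mu y * P_FY lam mu y x"
  proof (cases "x = y")
    case False
    show ?thesis
    proof (cases "\<exists>q. is_move (length lam) (length mu) q x y")
      case True
      then obtain i1 j1 i2 j2 where m: "is_move (length lam) (length mu) (i1, j1, i2, j2) x y"
        by (metis prod_cases4)
      note mc = move_case[OF m x y]
      have "piFY lam mu x * (real (x i1 j1) * real (x i2 j2)) = piFY lam mu y * (real (y i1 j2) * real (y i2 j1))"
        by (rule piFY_move[OF m])
      then show ?thesis using False unfolding off_vals[OF False] off_vals[OF not_sym[OF False]] mc(2,3)
        by (simp add: field_simps)
    next
      case nm: False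
      show ?thesis using False nm unfolding off_vals[OF False] off_vals[OF not_sym[OF False]]
        by (simp add: no_move_case)
    qed
  qed simp
next
  fix x assume "x \<in> tables lam mu"
  then show "(\<Sum>y\<in>tables lam mu. P_FY lam mu x y) = 1" unfolding P_FY_def by (rule kernel_rows[OF finite_tables])
next
  fix x y :: table assume "x \<noteq> y" then show "0 \<le> P_FY lam mu x y" by (simp add: off_vals PFY_off_nonneg)
qed (rule piFY_pos)

lemma inst_FYM: "revk (length (enum_states (tables lam mu)))
   (\<lambda>i j. P_FYM lam mu (enum_states (tables lam mu) ! i) (enum_states (tables lam mu) ! j))
   (\<lambda>i. piFY lam mu (enum_states (tables lam mu) ! i))"
proof (rule revk_from_kernel[OF finite_tables card2])
  fix x y assume x: "x \<in> tables lam mu" and y: "y \<in> tables lam mu"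
  show "piFY lam mu x * P_FYM lam mu x y = piFY lam mu y * P_FYM lam mu y x"
  proof (cases "x = y")
    case False
    have "piFY lam mu x * P_FYM lam mu x y = PU_off lam mu x y * (piFY lam mu x * min 1 (piFY lam mu y / piFY lam mu x))"
      unfolding off_vals[OF False] by (simp add: mult_ac)
    also have "\<dots> = PU_off lam mu x y * min (piFY lam mu x) (piFY lam mu y)"
      using min_scale[OF piFY_pos] by simp
    also have "\<dots> = PU_off lam mu y x * (piFY lam mu y * min 1 (piFY lam mu x / piFY lam mu y))"
      using min_scale[OF piFY_pos] PU_off_sym[OF x y] by (simp add: min.commute)
    also have "\<dots> = piFY lam mu y * P_FYM lam mu y x"
      unfolding off_vals[OF not_sym[OF False]] by (simp add: mult_ac)
    finally show ?thesis .
  qed simp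
next
  fix x assume "x \<in> tables lam mu"
  then show "(\<Sum>y\<in>tables lam mu. P_FYM lam mu x y) = 1" unfolding P_FYM_def by (rule kernel_rows[OF finite_tables])
next
  fix x y :: table assume "x \<noteq> y" then show "0 \<le> P_FYM lam mu x y"
    using piFY_pos[of lam mu x] piFY_pos[of lam mu y]
    by (simp add: off_vals PU_off_nonneg)
qed (rule piFY_pos)

end


section \<open>Comparisons\<close>

lemma cmp_all:
  assumes x: "x \<in> tables lam mu" and y: "y \<in> tables lam mu" and xy: "x \<noteq> y"
    and IJ: "0 < length lam * length mu" and n: "0 < sum_list lam"
  defines "c1 \<equiv> (real (length lam * length mu))^2 / (real (sum_list lam))^2"
    and "M \<equiv> real (max_entry lam mu)"
  shows "c1 * P_U lam mu x y \<le> P_UM lam mu x y"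
    "(1 / (c1 * M^2)) * P_UM lam mu x y \<le> P_U lam mu x y"
    "c1 * P_FYM lam mu x y \<le> P_FY lam mu x y"
    "(1 / (c1 * M^2)) * P_FY lam mu x y \<le> P_FYM lam mu x y"
proof -
  define nr where "nr = real (sum_list lam)"
  define ir where "ir = real (length lam * length mu)"
  define A where "A = 2 / nr^2"
  define B where "B = 2 / ir^2"
  have npos: "0 < nr" using n unfolding nr_def by (metis of_nat_0_less_iff)
  have IJpos: "0 < ir" using IJ unfolding ir_def by (metis of_nat_0_less_iff)
  have c1d: "c1 = ir^2 / nr^2" unfolding c1_def nr_def ir_def ..
  have Apos: "0 < A" unfolding A_def using npos by simp
  have Bpos: "0 < B" unfolding B_def using IJpos by simp
  have c1pos: "0 < c1" unfolding c1d using IJpos npos by simp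
  have cB: "c1 * B = A" unfolding c1d A_def B_def using IJpos npos by (simp add: field_simps)
  note ov = off_vals[OF xy]
  have "(c1 * P_U lam mu x y \<le> P_UM lam mu x y \<and> (1 / (c1 * M^2)) * P_UM lam mu x y \<le> P_U lam mu x y)
      \<and> (c1 * P_FYM lam mu x y \<le> P_FY lam mu x y \<and> (1 / (c1 * M^2)) * P_FY lam mu x y \<le> P_FYM lam mu x y)"
  proof (cases "\<exists>q. is_move (length lam) (length mu) q x y")
    case True
    then obtain i1 j1 i2 j2 where m: "is_move (length lam) (length mu) (i1, j1, i2, j2) x y"
      by (metis prod_cases4)
    define u where "u = real (x i1 j1) * real (x i2 j2)"
    define v where "v = real (y i1 j2) * real (y i2 j1)"
    note mc = move_case[OF m x y, folded u_def v_def]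
    have PU: "P_U lam mu x y = B" unfolding ov mc(1) B_def ir_def ..
    have PFY: "P_FY lam mu x y = A * u" unfolding ov mc(2) A_def nr_def by simp
    have PUM: "P_UM lam mu x y = min (A * u) (A * v)" unfolding ov mc(2,3) A_def nr_def by simp
    have PFYM: "P_FYM lam mu x y = B * min 1 (u / v)" unfolding ov mc(1,8) B_def ir_def ..
    have u1: "1 \<le> u" and v1: "1 \<le> v" and uM: "u \<le> M^2" and vM: "v \<le> M^2"
      using mc(4-7) unfolding M_def by auto
    have M2pos: "0 < M^2" using u1 uM by linarith
    have k: "0 < c1 * M^2" using c1pos M2pos by simp
    have a1: "c1 * P_U lam mu x y \<le> P_UM lam mu x y"
      unfolding PU PUM cB using Apos u1 v1 by (simp add: mult_le_cancel_left1)
    have a2: "(1 / (c1 * M^2)) * P_UM lam mu x y \<le> P_U lam mu x y"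
    proof -
      have "P_UM lam mu x y \<le> A * M^2" unfolding PUM using uM Apos by (simp add: min.coboundedI1)
      also have "A * M^2 = (c1 * M^2) * B" using cB by (simp add: mult_ac)
      finally show ?thesis unfolding PU using k by (simp add: field_simps)
    qed
    have b1: "c1 * P_FYM lam mu x y \<le> P_FY lam mu x y"
    proof -
      have "c1 * P_FYM lam mu x y = A * min 1 (u / v)" unfolding PFYM cB[symmetric] by (simp add: mult_ac)
      also have "\<dots> \<le> A * 1" using Apos by (intro mult_left_mono) auto
      also have "\<dots> \<le> A * u" using Apos u1 by (intro mult_left_mono) auto
      finally show ?thesis unfolding PFY .
    qed
    have b2: "(1 / (c1 * M^2)) * P_FY lam mu x y \<le> P_FYM lam mu x y"
    proof -
      have "(1 / (c1 * M^2)) * P_FY lam mu x y = B * (u / M^2)"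
        unfolding PFY cB[symmetric] using c1pos M2pos by (simp add: field_simps)
      also have "u / M^2 \<le> min 1 (u / v)"
      proof -
        have "u / M^2 \<le> 1" using uM M2pos by simp
        moreover have "u / M^2 \<le> u / v" using vM u1 mult_pos_pos[OF M2pos, of v] v1 by (intro divide_left_mono) auto
        ultimately show ?thesis by simp
      qed
      then have "B * (u / M^2) \<le> B * min 1 (u / v)" using Bpos by (intro mult_left_mono) auto
      finally show ?thesis unfolding PFYM .
    qed
    show ?thesis using a1 a2 b1 b2 by blast
  next
    case False
    note z = no_move_case[OF False]
    show ?thesis unfolding ov z by simp
  qed
  then show "c1 * P_U lam mu x y \<le> P_UM lam mu x y"
    "(1 / (c1 * M^2)) * P_UM lam mu x y \<le> P_U lam mu x y"
    "c1 * P_FYM lam mu x y \<le> P_FY lam mu x y"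
    "(1 / (c1 * M^2)) * P_FY lam mu x y \<le> P_FYM lam mu x y" by auto
qed

section \<open>Minimum entry\<close>

lemma sum_lt_ex:
  fixes f g :: "nat \<Rightarrow> nat"
  assumes "finite A" "(\<Sum>k\<in>A. f k) = (\<Sum>k\<in>A. g k)" "k0 \<in> A" "g k0 < f k0"
  shows "\<exists>k\<in>A. f k < g k"
proof (rule ccontr)
  assume "\<not> (\<exists>k\<in>A. f k < g k)"
  then have "\<forall>k\<in>A. g k \<le> f k" by auto
  then have "(\<Sum>k\<in>A. g k) < (\<Sum>k\<in>A. f k)" using assms by (intro sum_strict_mono_ex1) auto
  then show False using assms by simp
qed

lemma exists_one:
  assumes x: "x \<in> tables lam mu" and y: "y \<in> tables lam mu" and xy: "x \<noteq> y"
  shows "\<exists>z\<in>tables lam mu. \<exists>i<length lam. \<exists>j<length mu. z i j = 1"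
proof -
  let ?I = "length lam" and ?J = "length mu"
  obtain i j where ij: "x i j \<noteq> y i j" using xy by (meson ext)
  have ir: "i < ?I" and jr: "j < ?J" using ij tables_out[OF x] tables_out[OF y] by (metis not_le)+
  have "\<exists>i1<?I. \<exists>j1<?J. x i1 j1 < y i1 j1"
  proof (cases "x i j < y i j")
    case True then show ?thesis using ir jr by blast
  next
    case False
    then have "y i j < x i j" using ij by simp
    moreover have "(\<Sum>j<?J. y i j) = (\<Sum>j<?J. x i j)" using tables_row[OF x ir] tables_row[OF y ir] by simp
    ultimately obtain j' where "j' < ?J" "y i j' > x i j'"
      using sum_lt_ex[of "{..<?J}" "\<lambda>j. x i j" "\<lambda>j. y i j" j] jr by fastforce
    then show ?thesis using ir by blast
  qed
  then obtain i1 j1 where i1: "i1 < ?I" and j1: "j1 < ?J" and lt: "x i1 j1 < y i1 j1" by blast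
  have "(\<Sum>j<?J. y i1 j) = (\<Sum>j<?J. x i1 j)" using tables_row[OF x i1] tables_row[OF y i1] by simp
  then obtain j2 where j2: "j2 < ?J" and lt2: "y i1 j2 < x i1 j2"
    using sum_lt_ex[of "{..<?J}" "\<lambda>j. y i1 j" "\<lambda>j. x i1 j" j1] j1 lt by fastforce
  have "(\<Sum>i<?I. y i j1) = (\<Sum>i<?I. x i j1)" using tables_col[OF x j1] tables_col[OF y j1] by simp
  then obtain i2 where i2: "i2 < ?I" and lt3: "y i2 j1 < x i2 j1"
    using sum_lt_ex[of "{..<?I}" "\<lambda>i. y i j1" "\<lambda>i. x i j1" i1] i1 lt by fastforce
  have d: "i1 \<noteq> i2" "j1 \<noteq> j2" using lt lt2 lt3 by auto
  define a where "a = x i1 j2"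
  define b where "b = x i2 j1"
  have a1: "1 \<le> a" and b1: "1 \<le> b" using lt2 lt3 unfolding a_def b_def by auto
  define k where "k = min a b - 1"
  have ka: "k \<le> a" and kb: "k \<le> b" unfolding k_def by auto
  define z where "z = (\<lambda>i j. if (i = i1 \<and> j = j1) \<or> (i = i2 \<and> j = j2) then x i j + k
     else if (i = i1 \<and> j = j2) \<or> (i = i2 \<and> j = j1) then x i j - k else x i j)"
  define dl :: "nat \<Rightarrow> nat \<Rightarrow> int" where "dl = (\<lambda>i j. (if i = i1 \<and> j = j1 then 1 else 0) + (if i = i2 \<and> j = j2 then 1 else 0)
     - (if i = i1 \<and> j = j2 then 1 else 0) - (if i = i2 \<and> j = j1 then 1 else 0))"
  have zint: "int (z i j) = int (x i j) + int k * dl i j" for i j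
    using d ka kb unfolding z_def dl_def a_def b_def by auto
  have rowd: "(\<Sum>j<?J. dl i j) = 0" for i
    using j1 j2 d unfolding dl_def by (cases "i = i1"; cases "i = i2") (simp_all add: sum.distrib sum_subtractf sum.delta)
  have cold: "(\<Sum>i<?I. dl i j) = 0" if "j < ?J" for j
    using i1 i2 d unfolding dl_def by (cases "j = j1"; cases "j = j2") (simp_all add: sum.distrib sum_subtractf sum.delta)
  have zT: "z \<in> tables lam mu"
    unfolding tables_def
  proof (intro CollectI conjI allI impI)
    fix i j assume "length lam \<le> i \<or> length mu \<le> j"
    then show "z i j = 0" using tables_out[OF x] i1 i2 j1 j2 unfolding z_def by auto
  next
    fix i assume i: "i < ?I"
    have "int (\<Sum>j<?J. z i j) = (\<Sum>j<?J. int (x i j)) + int k * (\<Sum>j<?J. dl i j)"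
      by (simp add: zint sum.distrib sum_distrib_left)
    also have "\<dots> = int (\<Sum>j<?J. x i j)" using rowd by simp
    finally show "(\<Sum>j<?J. z i j) = lam ! i" using tables_row[OF x i] by linarith
  next
    fix j assume j: "j < ?J"
    have "int (\<Sum>i<?I. z i j) = (\<Sum>i<?I. int (x i j)) + int k * (\<Sum>i<?I. dl i j)"
      by (simp add: zint sum.distrib sum_distrib_left)
    also have "\<dots> = int (\<Sum>i<?I. x i j)" using cold[OF j] by simp
    finally show "(\<Sum>i<?I. z i j) = mu ! j" using tables_col[OF x j] by linarith
  qed
  have "z i1 j2 = 1 \<or> z i2 j1 = 1"
    using d a1 b1 unfolding z_def k_def a_def b_def by auto
  then show ?thesis using zT i1 i2 j1 j2 by blast
qed




lemma two_elems: assumes "2 \<le> card T" shows "\<exists>x y. x \<in> T \<and> y \<in> T \<and> x \<noteq> y"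
proof -
  have "finite T" using assms card.infinite by fastforce
  have "T \<noteq> {}" using assms by auto
  then obtain x where x: "x \<in> T" by blast
  have "card (T - {x}) \<ge> 1" using assms x \<open>finite T\<close> by (simp add: card_Diff_singleton)
  then have "card (T - {x}) \<noteq> 0" by simp
  then have "T - {x} \<noteq> {}" by (metis card.empty)
  then obtain y where "y \<in> T - {x}" by blast
  then show ?thesis using x by blast
qed

theorem theorem5p2:
  fixes lam mu :: "nat list" and n :: nat
  assumes "is_partition lam n" and "is_partition mu n"
    and "card (tables lam mu) \<ge> 2"
  defines "I \<equiv> real (length lam)" and "J \<equiv> real (length mu)"
    and "T \<equiv> tables lam mu"
    and "m \<equiv> real (min_pos_entry lam mu)" and "M \<equiv> real (max_entry lam mu)"
  shows
    "(m\<^sup>2 * (I * J)\<^sup>2 / (real n)\<^sup>2 * relaxation_time T (P_UM lam mu) \<le> relaxation_time T (P_U lam mu)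
     \<and> relaxation_time T (P_U lam mu) \<le> M\<^sup>2 * (I * J)\<^sup>2 / (real n)\<^sup>2 * relaxation_time T (P_UM lam mu))
    \<and> ((real n)\<^sup>2 / ((I * J)\<^sup>2 * M ^ 4) * relaxation_time T (P_FYM lam mu) \<le> relaxation_time T (P_FY lam mu)
     \<and> relaxation_time T (P_FY lam mu) \<le> (real n)\<^sup>2 / ((I * J)\<^sup>2 * m ^ 4) * relaxation_time T (P_FYM lam mu))
    \<and> min_pos_entry lam mu \<ge> 1
    \<and> max_entry lam mu \<le> Max {max (lam ! i) (mu ! j) | i j. i < length lam \<and> j < length mu}"
proof -
  have card2: "2 \<le> card (tables lam mu)" using assms(3) .
  have sl: "sum_list lam = n" using assms(1) unfolding is_partition_def by simp
  obtain x y where x: "x \<in> tables lam mu" and y: "y \<in> tables lam mu" and xy: "x \<noteq> y"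
    using two_elems[OF card2] by blast
  obtain z i0 j0 where z: "z \<in> tables lam mu" and i0: "i0 < length lam" and j0: "j0 < length mu"
    and z1: "z i0 j0 = 1" using exists_one[OF x y xy] by blast
  have "0 < length lam" "0 < length mu" using i0 j0 by linarith+
  then have IJ: "0 < length lam * length mu" by (rule mult_pos_pos)
  have npos: "0 < sum_list lam"
    using entry_le_n[OF z, of i0 j0] z1 by simp
  have min1: "min_pos_entry lam mu = 1"
    unfolding min_pos_entry_def
  proof (rule Min_eqI[OF entries_pos_finite])
    show "1 \<in> {x i j |x i j. x \<in> tables lam mu \<and> i < length lam \<and> j < length mu \<and> 0 < x i j}"
    proof -
      have "\<exists>x i j. 1 = x i j \<and> x \<in> tables lam mu \<and> i < length lam \<and> j < length mu \<and> 0 < x i j"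
        using z i0 j0 z1 by (intro exI[of _ z] exI[of _ i0] exI[of _ j0]) simp
      then show ?thesis by simp
    qed
  qed auto
  have M1: "1 \<le> max_entry lam mu"
    using entry_le_max[OF z i0 j0] z1 by simp
  have maxle: "max_entry lam mu \<le> Max {max (lam ! i) (mu ! j) | i j. i < length lam \<and> j < length mu}"
  proof -
    let ?S = "{max (lam ! i) (mu ! j) | i j. i < length lam \<and> j < length mu}"
    have finS: "finite ?S"
      by (rule finite_subset[of _ "(\<lambda>(i, j). max (lam ! i) (mu ! j)) ` ({..<length lam} \<times> {..<length mu})"]) auto
    have ne: "{x i j |x i j. x \<in> tables lam mu \<and> i < length lam \<and> j < length mu} \<noteq> {}" using z i0 j0 by blast
    show ?thesis unfolding max_entry_def
    proof (rule Max.boundedI[OF entries_finite ne])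
      fix e assume "e \<in> {x i j |x i j. x \<in> tables lam mu \<and> i < length lam \<and> j < length mu}"
      then obtain x i j where e: "e = x i j" and xi: "x \<in> tables lam mu" "i < length lam" "j < length mu" by blast
      have "x i j \<le> max (lam ! i) (mu ! j)" using entry_le_row[OF xi(1,2), of j] by (simp add: le_max_iff_disj)
      also have "\<dots> \<le> Max ?S" by (rule Max_ge[OF finS]) (use xi in blast)
      finally show "e \<le> Max ?S" using e by simp
    qed
  qed
  define xs where "xs = enum_states (tables lam mu)"
  define N where "N = length xs"
  define w where "w = (\<lambda>i. piFY lam mu (xs ! i))"
  define aU where "aU = (\<lambda>i j. P_U lam mu (xs ! i) (xs ! j))"
  define aUM where "aUM = (\<lambda>i j. P_UM lam mu (xs ! i) (xs ! j))"
  define aFY where "aFY = (\<lambda>i j. P_FY lam mu (xs ! i) (xs ! j))"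
  define aFYM where "aFYM = (\<lambda>i j. P_FYM lam mu (xs ! i) (xs ! j))"
  have RU: "revk N aU (\<lambda>i. 1)" using inst_U[OF card2] unfolding N_def aU_def xs_def .
  have RUM: "revk N aUM (\<lambda>i. 1)" using inst_UM[OF card2] unfolding N_def aUM_def xs_def .
  have RFY: "revk N aFY w" using inst_FY[OF card2] unfolding N_def aFY_def xs_def w_def .
  have RFYM: "revk N aFYM w" using inst_FYM[OF card2] unfolding N_def aFYM_def xs_def w_def .
  have xsp: "distinct xs" "set xs = tables lam mu" using enum_states[OF finite_tables] unfolding xs_def by auto
  have mem: "\<And>i. i < N \<Longrightarrow> xs ! i \<in> tables lam mu" using xsp unfolding N_def by auto
  have dif: "\<And>i j. i < N \<Longrightarrow> j < N \<Longrightarrow> i \<noteq> j \<Longrightarrow> xs ! i \<noteq> xs ! j"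
    using xsp unfolding N_def by (simp add: nth_eq_iff_index_eq)
  define c1 where "c1 = (real (length lam * length mu))^2 / (real (sum_list lam))^2"
  define Mr where "Mr = real (max_entry lam mu)"
  note cmp = cmp_all[OF mem mem dif IJ npos, folded c1_def Mr_def]
  have c1pos: "0 < c1" unfolding c1_def using IJ npos by (metis of_nat_0_less_iff zero_less_power divide_pos_pos)
  have Mr1: "1 \<le> Mr" unfolding Mr_def using M1 by simp
  have kpos: "0 < c1 * Mr^2" using c1pos Mr1 by simp
  define gU where "gU = 1 - revk.lstar N aU (\<lambda>i. 1)"
  define gUM where "gUM = 1 - revk.lstar N aUM (\<lambda>i. 1)"
  define gFY where "gFY = 1 - revk.lstar N aFY w"
  define gFYM where "gFYM = 1 - revk.lstar N aFYM w"
  have g0: "0 \<le> gU" "0 \<le> gUM" "0 \<le> gFY" "0 \<le> gFYM"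
    unfolding gU_def gUM_def gFY_def gFYM_def using lstar_le1[OF RU] lstar_le1[OF RUM] lstar_le1[OF RFY] lstar_le1[OF RFYM] by auto
  have e1: "c1 * gU \<le> gUM" unfolding gU_def gUM_def
    by (rule lstar_compare[OF RUM RU]) (use c1pos cmp(1) in \<open>auto simp: aU_def aUM_def\<close>)
  have e2: "(1 / (c1 * Mr^2)) * gUM \<le> gU" unfolding gU_def gUM_def
    by (rule lstar_compare[OF RU RUM]) (use kpos cmp(2) in \<open>auto simp: aU_def aUM_def\<close>)
  have e3: "c1 * gFYM \<le> gFY" unfolding gFY_def gFYM_def
    by (rule lstar_compare[OF RFY RFYM]) (use c1pos cmp(3) in \<open>auto simp: aFY_def aFYM_def\<close>)
  have e4: "(1 / (c1 * Mr^2)) * gFY \<le> gFYM" unfolding gFY_def gFYM_def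
    by (rule lstar_compare[OF RFYM RFY]) (use kpos cmp(4) in \<open>auto simp: aFY_def aFYM_def\<close>)
  have tU: "relaxation_time T (P_U lam mu) = 1 / gU"
    unfolding relaxation_time_def spectral_gap_def gU_def T_def
    using second_eigenvalue_lstar[OF RU[unfolded N_def aU_def xs_def]] unfolding N_def aU_def xs_def by simp
  have tUM: "relaxation_time T (P_UM lam mu) = 1 / gUM"
    unfolding relaxation_time_def spectral_gap_def gUM_def T_def
    using second_eigenvalue_lstar[OF RUM[unfolded N_def aUM_def xs_def]] unfolding N_def aUM_def xs_def by simp
  have tFY: "relaxation_time T (P_FY lam mu) = 1 / gFY"
    unfolding relaxation_time_def spectral_gap_def gFY_def T_def
    using second_eigenvalue_lstar[OF RFY[unfolded N_def aFY_def xs_def]] unfolding N_def aFY_def xs_def by simp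
  have tFYM: "relaxation_time T (P_FYM lam mu) = 1 / gFYM"
    unfolding relaxation_time_def spectral_gap_def gFYM_def T_def
    using second_eigenvalue_lstar[OF RFYM[unfolded N_def aFYM_def xs_def]] unfolding N_def aFYM_def xs_def by simp
  have m1: "m = 1" unfolding m_def min1 by simp
  have cexp: "(I * J)\<^sup>2 / (real n)\<^sup>2 = c1" unfolding c1_def I_def J_def sl[symmetric] by simp
  have Mexp: "M = Mr" unfolding M_def Mr_def ..
  have a1: "c1 * (1 / gUM) \<le> 1 / gU"
    by (rule inv_cmp1[OF g0(2) g0(1) c1pos e1 _ e2]) (use kpos in simp)
  have a2: "1 / gU \<le> (c1 * Mr^2) * (1 / gUM)"
  proof (rule inv_cmp2[OF g0(2) g0(1) kpos _ c1pos e1])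
    show "gUM \<le> c1 * Mr^2 * gU" using e2 kpos by (simp add: field_simps)
  qed
  have b2: "1 / gFY \<le> (1 / c1) * (1 / gFYM)"
  proof (rule inv_cmp2[OF g0(4) g0(3) _ _ _ e4])
    show "0 < 1 / c1" using c1pos by simp
    show "gFYM \<le> 1 / c1 * gFY" using e3 c1pos by (simp add: field_simps)
    show "0 < 1 / (c1 * Mr^2)" using kpos by simp
  qed
  have b1: "(1 / (c1 * Mr^4)) * (1 / gFYM) \<le> 1 / gFY"
  proof (rule inv_cmp1[OF g0(4) g0(3) _ _ c1pos e3])
    show "0 < 1 / (c1 * Mr^4)" using c1pos Mr1 by simp
    have "Mr^2 \<le> Mr^4" using Mr1 by (simp add: power_increasing)
    have k4: "0 < c1 * Mr^4" using c1pos Mr1 by simp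
    have "c1 * Mr^2 \<le> c1 * Mr^4" using \<open>Mr^2 \<le> Mr^4\<close> c1pos by simp
    then have "1 / (c1 * Mr^4) \<le> 1 / (c1 * Mr^2)"
      using mult_pos_pos[OF k4 kpos] by (intro divide_left_mono) auto
    then have "(1 / (c1 * Mr^4)) * gFY \<le> (1 / (c1 * Mr^2)) * gFY" using g0(3) by (rule mult_right_mono)
    then show "(1 / (c1 * Mr^4)) * gFY \<le> gFYM" using e4 by linarith
  qed
  have s1: "m\<^sup>2 * (I * J)\<^sup>2 / (real n)\<^sup>2 = c1" using cexp m1 by simp
  have s2: "M\<^sup>2 * (I * J)\<^sup>2 / (real n)\<^sup>2 = c1 * Mr^2"
  proof -
    have "M\<^sup>2 * (I * J)\<^sup>2 / (real n)\<^sup>2 = M\<^sup>2 * ((I * J)\<^sup>2 / (real n)\<^sup>2)"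
      by (simp only: times_divide_eq_right)
    then show ?thesis using cexp Mexp by (simp add: mult.commute)
  qed
  have hI: "0 < I" unfolding I_def using IJ by simp
  have hJ: "0 < J" unfolding J_def using IJ by simp
  have hn: "0 < real n" using npos sl by simp
  have hM: "0 < M" unfolding M_def using M1 by simp
  have s3: "(real n)\<^sup>2 / ((I * J)\<^sup>2 * M ^ 4) = 1 / (c1 * Mr^4)"
    unfolding cexp[symmetric] Mexp[symmetric] using hI hJ hn hM by (simp add: field_simps)
  have s4: "(real n)\<^sup>2 / ((I * J)\<^sup>2 * m ^ 4) = 1 / c1"
    unfolding cexp[symmetric] m1 using hI hJ hn by (simp add: field_simps)
  show ?thesis unfolding s1 s2 s3 s4 tU tUM tFY tFYM
    using a1 a2 b1 b2 min1 maxle by simp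
qed


end
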